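(* Let $X$ be a finite $d$-dimensional CW-complex with set $S_d$ of (oriented) $d$-cells, and let $V_0\subset S_d$ be a spanning forest of $X$. Let $N=|S_d-V_0|$ and enumerate $S_d-V_0$ as $e_1,\dots,e_N$. Then $$\det((U+1)\,Id-Mesh(X;\{z(e_a)\},geometric))=\det(U\,Id-Mesh^\#(X;\{z(e_a)\},geometric))=U^N+\sum_{j=1}^N(-1)^j c_j U^{N-j},$$ where $$c_j=\sum_{V}\left(\frac{t_{d-1}(X_V)}{t_{d-1}(X_{V_0})}\right)^2,$$ the sum being over all spanning forests $V$ of $X$ with $|V\cap(S_d-V_0)|=j$.
   Context: $X^{d-1}$ is the $(d-1)$-skeleton, and for $V\subset S_d$, $X_V=X^{d-1}\cup V$. $C_d(\cdot;\mathbb R)$ denotes cellular chains, with the inner product making the oriented $d$-cells orthonormal; $\partial_d$ is the cellular boundary and $B_{d-1}$ the $(d-1)$-boundaries. A subset $V\subset S_d$ is a spanning forest of $X$ if the composite $C_d(X_V;\mathbb R)\xrightarrow{\partial_d}B_{d-1}(X_V;\mathbb R)\subset B_{d-1}(X;\mathbb R)$ is an isomorphism. For a finite CW complex $Y$, $t_{d-1}(Y)$ is the order of the torsion subgroup of $H_{d-1}(Y;\mathbb Z)$. Given the spanning forest $V_0$, for each $e\in S_d-V_0$ there is a unique $D(e)\in C_d(X_{V_0};\mathbb R)$ with $\partial_d D(e)=\partial_d e$; put $z(e)=e-D(e)\in Z_d(X;\mathbb R)$ (the geometric basis of $Z_d(X;\mathbb R)$). Then $Mesh(X;\{z(e_a)\},geometric)=(\langle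 z(e_a),z(e_b)\rangle)_{a,b=1}^N$, which equals $Id+Mesh^\#(X;\{z(e_a)\},geometric)$ with $Mesh^\#(X;\{z(e_a)\},geometric)=(\langle D(e_a),D(e_b)\rangle)_{a,b=1}^N$. *)

theory Defs
  imports "Jordan_Normal_Form.Determinant"
begin

(* A finite d-dimensional CW complex X is represented by its cellular chain data
   in degrees d, d-1, d-2:
     'd  = finite type of (oriented) d-cells      (S_d)
     'e  = finite type of (oriented) (d-1)-cells  (S_{d-1})
     'f  = finite type of (oriented) (d-2)-cells  (S_{d-2})
     bd  :: 'd => 'e => int   cellular boundary matrix of degree d
             (bd s t = incidence number of (d-1)-cell t in the boundary of d-cell s)
     bd' :: 'e => 'f => int   cellular boundary matrix of degree d-1.
   Chains are functions from cells to coefficients. *)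

definition supported_on :: "('d \<Rightarrow> 'a::zero) \<Rightarrow> 'd set \<Rightarrow> bool" where
  "supported_on c V \<longleftrightarrow> (\<forall>s. s \<notin> V \<longrightarrow> c s = 0)"

definition rbdry :: "('d::finite \<Rightarrow> 'e \<Rightarrow> int) \<Rightarrow> ('d \<Rightarrow> real) \<Rightarrow> ('e \<Rightarrow> real)" where
  "rbdry bd c = (\<lambda>t. \<Sum>s\<in>UNIV. c s * real_of_int (bd s t))"

definition ibdry :: "('d::finite \<Rightarrow> 'e \<Rightarrow> int) \<Rightarrow> ('d \<Rightarrow> int) \<Rightarrow> ('e \<Rightarrow> int)" where
  "ibdry bd c = (\<lambda>t. \<Sum>s\<in>UNIV. c s * bd s t)"

definition cinner :: "('d::finite \<Rightarrow> real) \<Rightarrow> ('d \<Rightarrow> real) \<Rightarrow> real" where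
  "cinner c c' = (\<Sum>s\<in>UNIV. c s * c' s)"

(* V is a spanning forest: C_d(X_V;R) --bd--> B_{d-1}(X_V;R) \<subseteq> B_{d-1}(X;R) is an isomorphism *)
definition spanning_forest :: "('d::finite \<Rightarrow> 'e \<Rightarrow> int) \<Rightarrow> 'd set \<Rightarrow> bool" where
  "spanning_forest bd V \<longleftrightarrow>
     inj_on (rbdry bd) {c. supported_on c V} \<and>
     rbdry bd ` {c. supported_on c V} = rbdry bd ` UNIV"

definition cell_chain :: "'d \<Rightarrow> ('d \<Rightarrow> real)" where
  "cell_chain e = (\<lambda>s. if s = e then 1 else 0)"

definition Dchain :: "('d::finite \<Rightarrow> 'e \<Rightarrow> int) \<Rightarrow> 'd set \<Rightarrow> 'd \<Rightarrow> ('d \<Rightarrow> real)" where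
  "Dchain bd V0 e = (THE D. supported_on D V0 \<and> rbdry bd D = rbdry bd (cell_chain e))"

definition zcycle :: "('d::finite \<Rightarrow> 'e \<Rightarrow> int) \<Rightarrow> 'd set \<Rightarrow> 'd \<Rightarrow> ('d \<Rightarrow> real)" where
  "zcycle bd V0 e = (\<lambda>s. cell_chain e s - Dchain bd V0 e s)"

(* Mesh(X;{z(e_a)},geometric) for the enumeration e_0..e_{N-1} (0-based) *)
definition Mesh_geom :: "('d::finite \<Rightarrow> 'e \<Rightarrow> int) \<Rightarrow> 'd set \<Rightarrow> nat \<Rightarrow> (nat \<Rightarrow> 'd) \<Rightarrow> real mat" where
  "Mesh_geom bd V0 N en =
     mat N N (\<lambda>(a,b). cinner (zcycle bd V0 (en a)) (zcycle bd V0 (en b)))"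

definition Mesh_sharp_geom :: "('d::finite \<Rightarrow> 'e \<Rightarrow> int) \<Rightarrow> 'd set \<Rightarrow> nat \<Rightarrow> (nat \<Rightarrow> 'd) \<Rightarrow> real mat" where
  "Mesh_sharp_geom bd V0 N en =
     mat N N (\<lambda>(a,b). cinner (Dchain bd V0 (en a)) (Dchain bd V0 (en b)))"

(* integral cellular (d-1)-cycles of X_V (X_V has the same (d-1)-skeleton as X) *)
definition cycles_dm1 :: "('e::finite \<Rightarrow> 'f \<Rightarrow> int) \<Rightarrow> ('e \<Rightarrow> int) set" where
  "cycles_dm1 bd' = {z. ibdry bd' z = (\<lambda>_. 0)}"

definition bounds_dm1 :: "('d::finite \<Rightarrow> 'e \<Rightarrow> int) \<Rightarrow> 'd set \<Rightarrow> ('e \<Rightarrow> int) set" where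
  "bounds_dm1 bd V = {ibdry bd c | c. supported_on c V}"

(* t_{d-1}(X_V): order of the torsion subgroup of H_{d-1}(X_V;Z) = Z_{d-1} / B_{d-1}(X_V),
   computed as the number of classes of torsion cycles modulo boundaries *)
definition torsion_order :: "('d::finite \<Rightarrow> 'e::finite \<Rightarrow> int) \<Rightarrow> ('e \<Rightarrow> 'f \<Rightarrow> int) \<Rightarrow> 'd set \<Rightarrow> nat" where
  "torsion_order bd bd' V =
     card ({z \<in> cycles_dm1 bd'. \<exists>k::int. k > 0 \<and> (\<lambda>t. k * z t) \<in> bounds_dm1 bd V}
           // {(x, y). (\<lambda>t. x t - y t) \<in> bounds_dm1 bd V})"

end

theory Submission
  imports Defs
begin

definition icell :: "'d \<Rightarrow> 'd \<Rightarrow> int" where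
  "icell s = (\<lambda>s'. if s' = s then 1 else 0)"

lemma rbdry_sum:
  "rbdry bd (\<lambda>s. \<Sum>i\<in>I. a i * x i s) = (\<lambda>t. \<Sum>i\<in>I. a i * rbdry bd (x i) t)"
  unfolding rbdry_def
  by (rule ext) (simp add: sum_distrib_left sum_distrib_right mult.assoc sum.swap[where A=I])

lemma rbdry_lin:
  "rbdry bd (\<lambda>s. a * x s + b * y s) = (\<lambda>t. a * rbdry bd x t + b * rbdry bd y t)"
  unfolding rbdry_def
  by (rule ext) (simp add: sum_distrib_left distrib_right sum.distrib mult.assoc)

lemma rbdry_diff:
  "rbdry bd (\<lambda>s. x s - y s) = (\<lambda>t. rbdry bd x t - rbdry bd y t)"
  unfolding rbdry_def
  by (rule ext) (simp add: left_diff_distrib sum_subtractf)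

lemma rbdry_scale:
  "rbdry bd (\<lambda>s. a * x s) = (\<lambda>t. a * rbdry bd x t)"
  unfolding rbdry_def
  by (rule ext) (simp add: sum_distrib_left mult.assoc)

lemma rbdry_zero: "rbdry bd (\<lambda>s. 0) = (\<lambda>t. 0)"
  unfolding rbdry_def by simp

lemma rbdry_cell: "rbdry bd (cell_chain e) = (\<lambda>t. real_of_int (bd e t))"
  unfolding rbdry_def cell_chain_def
proof (rule ext)
  fix t
  have "(\<Sum>s\<in>UNIV. (if s = e then 1 else 0) * real_of_int (bd s t)) =
        (\<Sum>s\<in>UNIV. if s = e then real_of_int (bd s t) else 0)"
    by (rule sum.cong) auto
  then show "(\<Sum>s\<in>UNIV. (if s = e then 1 else 0) * real_of_int (bd s t)) = real_of_int (bd e t)"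
    by simp
qed

lemma rbdry_of_int: "rbdry bd (\<lambda>s. real_of_int (c s)) = (\<lambda>t. real_of_int (ibdry bd c t))"
  unfolding rbdry_def ibdry_def by (rule ext) simp

lemma ibdry_icell: "ibdry bd (icell e) = bd e"
  unfolding ibdry_def icell_def
proof (rule ext)
  fix t
  have "(\<Sum>s\<in>UNIV. (if s = e then 1 else 0) * bd s t) =
        (\<Sum>s\<in>UNIV. if s = e then bd s t else 0)"
    by (rule sum.cong) auto
  then show "(\<Sum>s\<in>UNIV. (if s = e then 1 else 0) * bd s t) = bd e t"
    by simp
qed

lemma ibdry_lin:
  "ibdry bd (\<lambda>s. a * x s + b * y s) = (\<lambda>t. a * ibdry bd x t + b * ibdry bd y t)"
  unfolding ibdry_def
  by (rule ext) (simp add: sum_distrib_left distrib_right sum.distrib mult.assoc)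

lemma ibdry_diff:
  "ibdry bd (\<lambda>s. x s - y s) = (\<lambda>t. ibdry bd x t - ibdry bd y t)"
  unfolding ibdry_def
  by (rule ext) (simp add: left_diff_distrib sum_subtractf)

lemma supported_onD: "supported_on c V \<Longrightarrow> s \<notin> V \<Longrightarrow> c s = 0"
  unfolding supported_on_def by auto

lemma forest_unique:
  assumes "spanning_forest bd V" "supported_on c1 V" "supported_on c2 V"
    "rbdry bd c1 = rbdry bd c2"
  shows "c1 = c2"
  using assms unfolding spanning_forest_def inj_on_def by auto

lemma forest_exists:
  assumes "spanning_forest bd V"
  shows "\<exists>c. supported_on c V \<and> rbdry bd c = rbdry bd x"
proof -
  have "rbdry bd x \<in> rbdry bd ` {c. supported_on c V}"
    using assms unfolding spanning_forest_def by auto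
  then show ?thesis by auto
qed

lemma Dchain_props:
  assumes "spanning_forest bd V0"
  shows "supported_on (Dchain bd V0 e) V0 \<and> rbdry bd (Dchain bd V0 e) = rbdry bd (cell_chain e)"
proof -
  obtain c where c: "supported_on c V0" "rbdry bd c = rbdry bd (cell_chain e)"
    using forest_exists[OF assms] by blast
  show ?thesis unfolding Dchain_def
    by (rule theI[where a=c]) (use c forest_unique[OF assms] in auto)
qed

lemma Dchain_unique:
  assumes "spanning_forest bd V0" "supported_on c V0" "rbdry bd c = rbdry bd (cell_chain e)"
  shows "Dchain bd V0 e = c"
  using Dchain_props[OF assms(1)] forest_unique[OF assms(1)] assms(2,3) by metis

lemma supported_cell: "e \<in> V \<Longrightarrow> supported_on (cell_chain e) V"
  unfolding supported_on_def cell_chain_def by auto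

lemma Dchain_V0:
  assumes "spanning_forest bd V0" "v \<in> V0"
  shows "Dchain bd V0 v = cell_chain v"
  by (rule Dchain_unique[OF assms(1) supported_cell[OF assms(2)] refl])

lemma det_row_expand:
  fixes g :: "nat \<Rightarrow> nat \<Rightarrow> 'a::comm_ring_1" and h :: "nat \<Rightarrow> nat \<Rightarrow> 'a"
  assumes fS: "finite S"
  shows "det (mat n n (\<lambda>(i,k). \<Sum>c\<in>S. g i c * h c k)) =
    (\<Sum>f\<in>{f. (\<forall>i\<in>{0..<n}. f i \<in> S) \<and> (\<forall>i. i \<notin> {0..<n} \<longrightarrow> f i = i)}.
       (\<Prod>i=0..<n. g i (f i)) * det (mat n n (\<lambda>(i,k). h (f i) k)))"
proof -
  let ?a = "\<lambda>i c. g i c \<cdot>\<^sub>v vec n (h c)"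
  have a: "?a \<in> {0..<n} \<rightarrow> S \<rightarrow> carrier_vec n" by auto
  have eq: "mat n n (\<lambda>(i,k). \<Sum>c\<in>S. g i c * h c k) =
      mat\<^sub>r n n (\<lambda>i. finsum_vec TYPE('a) n (?a i) S)"
  proof (rule eq_matI)
    fix i j assume ij: "i < dim_row (mat\<^sub>r n n (\<lambda>i. finsum_vec TYPE('a) n (?a i) S))"
      "j < dim_col (mat\<^sub>r n n (\<lambda>i. finsum_vec TYPE('a) n (?a i) S))"
    then have i: "i < n" and j: "j < n" by auto
    have "mat\<^sub>r n n (\<lambda>i. finsum_vec TYPE('a) n (?a i) S) $$ (i, j) =
        finsum_vec TYPE('a) n (?a i) S $ j" using i j by simp
    also have "\<dots> = (\<Sum>c\<in>S. ?a i c $ j)"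
      by (rule index_finsum_vec[OF fS j]) auto
    also have "\<dots> = (\<Sum>c\<in>S. g i c * h c j)" using j by simp
    finally show "mat n n (\<lambda>(i,k). \<Sum>c\<in>S. g i c * h c k) $$ (i, j) =
        mat\<^sub>r n n (\<lambda>i. finsum_vec TYPE('a) n (?a i) S) $$ (i, j)" using i j by simp
  qed auto
  show ?thesis
    unfolding eq det_linear_rows_sum[OF fS a]
  proof (rule sum.cong[OF refl])
    fix f assume f: "f \<in> {f. (\<forall>i\<in>{0..<n}. f i \<in> S) \<and> (\<forall>i. i \<notin> {0..<n} \<longrightarrow> f i = i)}"
    have "det (mat\<^sub>r n n (\<lambda>i. ?a i (f i))) = prod (\<lambda>i. g i (f i)) {0..<n} * det (mat\<^sub>r n n (\<lambda>i. vec n (h (f i))))"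
      by (rule det_rows_mul) auto
    moreover have "mat\<^sub>r n n (\<lambda>i. vec n (h (f i))) = mat n n (\<lambda>(i,k). h (f i) k)"
      by (rule eq_matI) auto
    ultimately show "det (mat\<^sub>r n n (\<lambda>i. ?a i (f i))) =
         (\<Prod>i = 0..<n. g i (f i)) * det (mat n n (\<lambda>(i,k). h (f i) k))" by simp
  qed
qed

definition enum_set :: "nat \<Rightarrow> 'a set \<Rightarrow> nat \<Rightarrow> 'a" where
  "enum_set n V = (SOME f. bij_betw f {0..<n} V)"

lemma enum_set_bij:
  assumes "finite V" "card V = n"
  shows "bij_betw (enum_set n V) {0..<n} V"
proof -
  have "\<exists>f. bij_betw f {0..<n} V"
    using finite_same_card_bij[of "{0..<n}" V] assms by auto
  then show ?thesis unfolding enum_set_def by (rule someI_ex)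
qed

lemma mat_eq_on:
  assumes "\<And>i j. i < n \<Longrightarrow> j < m \<Longrightarrow> f (i,j) = g (i,j)"
  shows "mat n m f = mat n m g"
  by (rule eq_matI) (use assms in auto)

lemma det_rows_noninj:
  fixes h :: "'x \<Rightarrow> nat \<Rightarrow> 'a::comm_ring_1"
  assumes "\<not> inj_on f {0..<n}"
  shows "det (mat n n (\<lambda>(i,k). h (f i) k)) = 0"
proof -
  obtain i j where ij: "i \<in> {0..<n}" "j \<in> {0..<n}" "i \<noteq> j" "f i = f j"
    using assms unfolding inj_on_def by auto
  show ?thesis
    by (rule det_identical_rows[of _ n i j]) (use ij in \<open>auto intro!: eq_vecI\<close>)
qed

lemma det_rows_perm:
  fixes h :: "'x \<Rightarrow> nat \<Rightarrow> 'a::comm_ring_1" and e :: "nat \<Rightarrow> 'x"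
  assumes p: "p permutes {0..<n}"
  shows "det (mat n n (\<lambda>(i,k). h (e (p i)) k)) = signof p * det (mat n n (\<lambda>(i,k). h (e i) k))"
proof -
  have pn: "\<And>i. i < n \<Longrightarrow> p i < n" using p permutes_in_image[OF p] by auto
  have "mat n n (\<lambda>(i,k). h (e (p i)) k) = mat n n (\<lambda>(i,j). (mat n n (\<lambda>(i,k). h (e i) k)) $$ (p i, j))"
    by (rule eq_matI) (auto simp: pn)
  then show ?thesis
    using det_permute_rows[OF _ p, of "mat n n (\<lambda>(i,k). h (e i) k)"] by simp
qed

lemma det_mat_transpose':
  fixes h :: "nat \<Rightarrow> nat \<Rightarrow> 'a::comm_ring_1"
  shows "det (mat n n (\<lambda>(i,k). h k i)) = det (mat n n (\<lambda>(i,k). h i k))"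
proof -
  have "mat n n (\<lambda>(i,k). h k i) = transpose_mat (mat n n (\<lambda>(i,k). h i k))"
    by (rule eq_matI) auto
  then show ?thesis using det_transpose[of "mat n n (\<lambda>(i,k). h i k)" n] by simp
qed

lemma det_leibniz_fun:
  fixes h :: "nat \<Rightarrow> nat \<Rightarrow> 'a::comm_ring_1"
  shows "det (mat n n (\<lambda>(i,k). h i k)) = (\<Sum>p\<in>{p. p permutes {0..<n}}. signof p * (\<Prod>i=0..<n. h i (p i)))"
proof -
  have "det (mat n n (\<lambda>(i,k). h i k)) = (\<Sum>p\<in>{p. p permutes {0..<n}}. signof p * (\<Prod>i=0..<n. (mat n n (\<lambda>(i,k). h i k)) $$ (i, p i)))"
    by (rule det_def') simp
  also have "\<dots> = (\<Sum>p\<in>{p. p permutes {0..<n}}. signof p * (\<Prod>i=0..<n. h i (p i)))"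
  proof (rule sum.cong[OF refl])
    fix p assume "p \<in> {p. p permutes {0..<n}}"
    then have pn: "\<And>i. i < n \<Longrightarrow> p i < n" using permutes_in_image by fastforce
    show "signof p * (\<Prod>i=0..<n. (mat n n (\<lambda>(i,k). h i k)) $$ (i, p i)) = signof p * (\<Prod>i=0..<n. h i (p i))"
      by (auto intro!: prod.cong simp: pn)
  qed
  finally show ?thesis .
qed

lemma cauchy_binet_w:
  fixes P :: "nat \<Rightarrow> nat \<Rightarrow> 'a::comm_ring_1" and d :: "nat \<Rightarrow> 'a"
  shows "det (mat n n (\<lambda>(i,k). \<Sum>c\<in>{0..<m}. P i c * d c * P k c)) =
    (\<Sum>V\<in>{V. V \<subseteq> {0..<m} \<and> card V = n}.
        (det (mat n n (\<lambda>(i,p). P i (enum_set n V p))))^2 * (\<Prod>c\<in>V. d c))"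
proof -
  define F where "F = {f. (\<forall>i\<in>{0..<n}. f i \<in> {0..<m}) \<and> (\<forall>i. i \<notin> {0..<n} \<longrightarrow> f i = i)}"
  define F' where "F' = {f\<in>F. inj_on f {0..<n}}"
  define Sets where "Sets = {V. V \<subseteq> {0..<m} \<and> card V = n}"
  define Perms where "Perms = {p. p permutes {0..<n}}"
  define trm where "trm = (\<lambda>f. (\<Prod>i=0..<n. P i (f i) * d (f i)) * det (mat n n (\<lambda>(i,k). P k (f i))))"
  define e where "e V = enum_set n V" for V :: "nat set"
  define cs where "cs V = det (mat n n (\<lambda>(i,p). P i (e V p)))" for V
  have finF: "finite F" unfolding F_def by (rule finite_bounded_functions) auto
  have step1: "det (mat n n (\<lambda>(i,k). \<Sum>c\<in>{0..<m}. P i c * d c * P k c)) = sum trm F"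
    unfolding trm_def F_def
    using det_row_expand[of "{0..<m}" n "\<lambda>i c. P i c * d c" "\<lambda>c k. P k c"] by simp
  have step2: "sum trm F = sum trm F'"
    unfolding F'_def
  proof (rule sum.mono_neutral_right[OF finF])
    show "\<forall>i\<in>F - {f \<in> F. inj_on f {0..<n}}. trm i = 0"
    proof
      fix f assume "f \<in> F - {f \<in> F. inj_on f {0..<n}}"
      then have "\<not> inj_on f {0..<n}" by auto
      then have "det (mat n n (\<lambda>(i,k). P k (f i))) = 0"
        using det_rows_noninj[of f n "\<lambda>c k. P k c"] by simp
      then show "trm f = 0" unfolding trm_def by simp
    qed
  qed auto
  define \<Phi> where "\<Phi> = (\<lambda>(V,p). (\<lambda>i. if i < n then e V (p i) else i))"
  define \<Psi> where "\<Psi> = (\<lambda>f. (f ` {0..<n}, (\<lambda>i. if i < n then inv_into {0..<n} (e (f ` {0..<n})) (f i) else i)))"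
  define g where "g = (\<lambda>(V,p). signof p * (\<Prod>i=0..<n. P i (e V (p i))) * (\<Prod>c\<in>V. d c) * cs V)"
  have ebij: "V \<in> Sets \<Longrightarrow> bij_betw (e V) {0..<n} V" for V
    unfolding e_def Sets_def by (rule enum_set_bij) (auto intro: finite_subset)
  have step3: "sum g (Sets \<times> Perms) = sum trm F'"
  proof (rule sum.reindex_bij_witness[where i=\<Psi> and j=\<Phi>])
    fix a assume a: "a \<in> Sets \<times> Perms"
    obtain V p where Vp: "a = (V,p)" "V \<in> Sets" "p permutes {0..<n}"
      using a unfolding Perms_def by auto
    have eb: "bij_betw (e V) {0..<n} V" using ebij[OF Vp(2)] .
    have pin: "i < n \<Longrightarrow> p i < n" for i using permutes_in_image[OF Vp(3)] by auto
    have pout: "\<not> i < n \<Longrightarrow> p i = i" for i using permutes_not_in[OF Vp(3)] by auto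
    have img: "(\<lambda>i. if i < n then e V (p i) else i) ` {0..<n} = V"
    proof -
      have "(\<lambda>i. if i < n then e V (p i) else i) ` {0..<n} = e V ` (p ` {0..<n})" by (auto simp: image_iff)
      also have "p ` {0..<n} = {0..<n}" using permutes_image[OF Vp(3)] .
      also have "e V ` {0..<n} = V" using eb bij_betw_imp_surj_on by blast
      finally show ?thesis .
    qed
    show "\<Psi> (\<Phi> a) = a"
      unfolding Vp(1) \<Phi>_def \<Psi>_def
      using img eb pin pout
      by (auto intro!: ext simp: bij_betw_inv_into_left)
    have inj: "inj_on (\<lambda>i. if i < n then e V (p i) else i) {0..<n}"
    proof (rule inj_onI)
      fix x y assume xy: "x \<in> {0..<n}" "y \<in> {0..<n}"
        "(if x < n then e V (p x) else x) = (if y < n then e V (p y) else y)"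
      then have "e V (p x) = e V (p y)" by simp
      then have "p x = p y" using eb pin xy(1,2) unfolding bij_betw_def inj_on_def by auto
      then show "x = y" using permutes_inj[OF Vp(3)] unfolding inj_def by auto
    qed
    show "\<Phi> a \<in> F'"
    proof -
      have "e V (p i) < m" if "i < n" for i
      proof -
        have "e V (p i) \<in> V" using eb pin[OF that] unfolding bij_betw_def by auto
        then show ?thesis using Vp(2) unfolding Sets_def by auto
      qed
      then show ?thesis
        unfolding Vp(1) \<Phi>_def F'_def F_def using inj by auto
    qed
    have "g a = signof p * (\<Prod>i=0..<n. P i (e V (p i))) * (\<Prod>c\<in>V. d c) * cs V"
      unfolding g_def Vp(1) by simp
    moreover have "trm (\<Phi> a) = (\<Prod>i=0..<n. P i (e V (p i)) * d (e V (p i))) * det (mat n n (\<lambda>(i,k). P k (e V (p i))))"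
    proof -
      have "mat n n (\<lambda>(i,k). P k (if i < n then e V (p i) else i)) = mat n n (\<lambda>(i,k). P k (e V (p i)))"
        by (rule mat_eq_on) auto
      then show ?thesis unfolding trm_def Vp(1) \<Phi>_def by (auto intro!: prod.cong)
    qed
    moreover have "(\<Prod>i=0..<n. P i (e V (p i)) * d (e V (p i))) = (\<Prod>i=0..<n. P i (e V (p i))) * (\<Prod>c\<in>V. d c)"
    proof -
      have "(\<Prod>i=0..<n. d (e V (p i))) = (\<Prod>i=0..<n. d (e V i))"
        using prod.permute[OF Vp(3), of "\<lambda>i. d (e V i)"] by (simp add: o_def)
      also have "\<dots> = (\<Prod>c\<in>V. d c)"
        using prod.reindex_bij_betw[OF eb, of d] by simp
      finally show ?thesis by (simp add: prod.distrib)
    qed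
    moreover have "det (mat n n (\<lambda>(i,k). P k (e V (p i)))) = signof p * cs V"
      unfolding cs_def
      using det_rows_perm[OF Vp(3), of "\<lambda>c k. P k c" "e V"] det_mat_transpose'[of n "\<lambda>i k. P k (e V i)"]
      by simp
    ultimately show "trm (\<Phi> a) = g a" by (simp add: ac_simps)
  next
    fix f assume f: "f \<in> F'"
    define V where "V = f ` {0..<n}"
    have finj: "inj_on f {0..<n}" and fin: "\<And>i. i < n \<Longrightarrow> f i < m" and fout: "\<And>i. \<not> i < n \<Longrightarrow> f i = i"
      using f unfolding F'_def F_def by auto
    have VS: "V \<in> Sets" unfolding Sets_def V_def using finj fin card_image[OF finj] by auto
    have eb: "bij_betw (e V) {0..<n} V" using ebij[OF VS] .
    have fb: "bij_betw f {0..<n} V" unfolding V_def using finj by (simp add: bij_betw_def)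
    define p where "p = (\<lambda>i. if i < n then inv_into {0..<n} (e V) (f i) else i)"
    have "bij_betw (inv_into {0..<n} (e V) \<circ> f) {0..<n} {0..<n}"
      by (rule bij_betw_trans[OF fb bij_betw_inv_into[OF eb]])
    then have "bij_betw p {0..<n} {0..<n}"
      by (rule bij_betw_cong[THEN iffD1, rotated]) (auto simp: p_def)
    then have pp: "p permutes {0..<n}"
      by (rule bij_imp_permutes) (auto simp: p_def)
    show "\<Psi> f \<in> Sets \<times> Perms"
      unfolding \<Psi>_def Perms_def using VS pp unfolding p_def V_def by auto
    show "\<Phi> (\<Psi> f) = f"
    proof (rule ext)
      fix i
      show "\<Phi> (\<Psi> f) i = f i"
      proof (cases "i < n")
        case True
        have "f i \<in> V" unfolding V_def using True by auto
        then show ?thesis unfolding \<Phi>_def \<Psi>_def using True eb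
          by (simp add: V_def[symmetric] bij_betw_inv_into_right)
      next
        case False
        then show ?thesis unfolding \<Phi>_def \<Psi>_def using fout by simp
      qed
    qed
  qed
  have step4: "sum g (Sets \<times> Perms) = (\<Sum>V\<in>Sets. (cs V)^2 * (\<Prod>c\<in>V. d c))"
  proof -
    have "sum g (Sets \<times> Perms) = (\<Sum>V\<in>Sets. \<Sum>p\<in>Perms. g (V,p))"
      using sum.cartesian_product[of "\<lambda>V p. g (V,p)" Perms Sets] by simp
    also have "\<dots> = (\<Sum>V\<in>Sets. (cs V)^2 * (\<Prod>c\<in>V. d c))"
    proof (rule sum.cong[OF refl])
      fix V assume V: "V \<in> Sets"
      have "(\<Sum>p\<in>Perms. signof p * (\<Prod>i=0..<n. P i (e V (p i)))) = cs V"
        unfolding cs_def Perms_def by (rule det_leibniz_fun[symmetric])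
      then have "(\<Sum>p\<in>Perms. g (V,p)) = cs V * ((\<Prod>c\<in>V. d c) * cs V)"
      proof -
        assume h: "(\<Sum>p\<in>Perms. signof p * (\<Prod>i=0..<n. P i (e V (p i)))) = cs V"
        have "(\<Sum>p\<in>Perms. g (V,p)) = (\<Sum>p\<in>Perms. (cs V * (\<Prod>c\<in>V. d c)) * (signof p * (\<Prod>i=0..<n. P i (e V (p i)))))"
          unfolding g_def by (rule sum.cong) (simp_all add: ac_simps)
        also have "\<dots> = (cs V * (\<Prod>c\<in>V. d c)) * cs V" unfolding sum_distrib_left[symmetric] h ..
        finally show ?thesis by (simp add: ac_simps)
      qed
      then show "(\<Sum>p\<in>Perms. g (V,p)) = (cs V)^2 * (\<Prod>c\<in>V. d c)"
        by (simp add: power2_eq_square ac_simps)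
    qed
    finally show ?thesis .
  qed
  show ?thesis
    using step1 step2 step3 step4 unfolding cs_def e_def Sets_def by simp
qed

lemma sylvester_det:
  fixes A :: "'a::idom mat" and U :: 'a
  assumes A: "A \<in> carrier_mat r N"
  shows "U ^ N * det (U \<cdot>\<^sub>m 1\<^sub>m r - A * transpose_mat A) = U ^ r * det (U \<cdot>\<^sub>m 1\<^sub>m N - transpose_mat A * A)"
proof -
  have At: "transpose_mat A \<in> carrier_mat N r" using A by simp
  define X where "X = four_block_mat (U \<cdot>\<^sub>m 1\<^sub>m r) A (transpose_mat A) (1\<^sub>m N)"
  define L1 where "L1 = four_block_mat (1\<^sub>m r) (- A) (0\<^sub>m N r) (1\<^sub>m N)"
  define L2 where "L2 = four_block_mat (1\<^sub>m r) (0\<^sub>m r N) (- transpose_mat A) (U \<cdot>\<^sub>m 1\<^sub>m N)"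
  have Xc: "X \<in> carrier_mat (r+N) (r+N)" unfolding X_def using A At by auto
  have L1c: "L1 \<in> carrier_mat (r+N) (r+N)" unfolding L1_def using A by auto
  have L2c: "L2 \<in> carrier_mat (r+N) (r+N)" unfolding L2_def using At by auto
  have dL1: "det L1 = 1" unfolding L1_def
    by (subst det_four_block_mat_lower_left_zero[of _ r _ N]) (use A in auto)
  have dL2: "det L2 = U ^ N" unfolding L2_def
    by (subst det_four_block_mat_upper_right_zero[of _ r _ N]) (use At in auto)
  have P1: "L1 * X = four_block_mat (U \<cdot>\<^sub>m 1\<^sub>m r - A * transpose_mat A) (0\<^sub>m r N) (transpose_mat A) (1\<^sub>m N)"
    unfolding L1_def X_def
    apply (subst mult_four_block_mat[of _ r r _ N _ N _ _ r _ N])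
    using A At by auto
  have P2: "L2 * X = four_block_mat (U \<cdot>\<^sub>m 1\<^sub>m r) A (0\<^sub>m N r) (U \<cdot>\<^sub>m 1\<^sub>m N - transpose_mat A * A)"
    unfolding L2_def X_def
    apply (subst mult_four_block_mat[of _ r r _ N _ N _ _ r _ N])
    using A At apply auto
    done
  have "det (L1 * X) = det (U \<cdot>\<^sub>m 1\<^sub>m r - A * transpose_mat A)"
    unfolding P1 by (subst det_four_block_mat_upper_right_zero[of _ r _ N]) (use A At in auto)
  moreover have "det (L1 * X) = det X" using det_mult[OF L1c Xc] dL1 by simp
  moreover have "det (L2 * X) = U ^ r * det (U \<cdot>\<^sub>m 1\<^sub>m N - transpose_mat A * A)"
    unfolding P2 by (subst det_four_block_mat_lower_left_zero[of _ r _ N]) (use A At in auto)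
  moreover have "det (L2 * X) = U ^ N * det X" using det_mult[OF L2c Xc] dL2 by simp
  ultimately show ?thesis by simp
qed

lemma det_col_linear:
  fixes h :: "'x \<Rightarrow> nat \<Rightarrow> 'a::comm_ring_1" and M :: "nat \<Rightarrow> nat \<Rightarrow> 'a"
  assumes p: "p < n" and X: "finite X"
  shows "det (mat n n (\<lambda>(i,j). if j = p then (\<Sum>x\<in>X. a x * h x i) else M i j)) =
    (\<Sum>x\<in>X. a x * det (mat n n (\<lambda>(i,j). if j = p then h x i else M i j)))"
proof -
  have split: "(\<Prod>i=0..<n. (if q i = p then S i else M i (q i))) =
      S (Hilbert_Choice.inv q p) * (\<Prod>i\<in>{0..<n} - {Hilbert_Choice.inv q p}. M i (q i))"
    if pi: "q permutes {0..<n}" for q and S :: "nat \<Rightarrow> 'a"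
  proof -
    have i0: "Hilbert_Choice.inv q p \<in> {0..<n}" using p permutes_inv[OF pi] permutes_in_image by fastforce
    have pi0: "q (Hilbert_Choice.inv q p) = p" using permutes_inverses(1)[OF pi] by simp
    have "(\<Prod>i=0..<n. (if q i = p then S i else M i (q i))) =
        (if q (Hilbert_Choice.inv q p) = p then S (Hilbert_Choice.inv q p) else M (Hilbert_Choice.inv q p) (q (Hilbert_Choice.inv q p))) *
        (\<Prod>i\<in>{0..<n} - {Hilbert_Choice.inv q p}. (if q i = p then S i else M i (q i)))"
      by (rule prod.remove[OF _ i0]) simp
    also have "(\<Prod>i\<in>{0..<n} - {Hilbert_Choice.inv q p}. (if q i = p then S i else M i (q i))) =
        (\<Prod>i\<in>{0..<n} - {Hilbert_Choice.inv q p}. M i (q i))"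
    proof (rule prod.cong[OF refl])
      fix i assume "i \<in> {0..<n} - {Hilbert_Choice.inv q p}"
      then have "q i \<noteq> p" using permutes_inverses(2)[OF pi] by (metis DiffD2 insertI1)
      then show "(if q i = p then S i else M i (q i)) = M i (q i)" by simp
    qed
    finally show ?thesis using pi0 by simp
  qed
  have "det (mat n n (\<lambda>(i,j). if j = p then (\<Sum>x\<in>X. a x * h x i) else M i j)) =
      (\<Sum>q\<in>{q. q permutes {0..<n}}. signof q * (\<Prod>i=0..<n. (if q i = p then (\<Sum>x\<in>X. a x * h x i) else M i (q i))))"
    by (rule det_leibniz_fun)
  also have "\<dots> = (\<Sum>q\<in>{q. q permutes {0..<n}}. \<Sum>x\<in>X. a x * (signof q * (h x (Hilbert_Choice.inv q p) * (\<Prod>i\<in>{0..<n} - {Hilbert_Choice.inv q p}. M i (q i)))))"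
    by (rule sum.cong[OF refl]) (simp add: split sum_distrib_left sum_distrib_right ac_simps)
  also have "\<dots> = (\<Sum>x\<in>X. a x * (\<Sum>q\<in>{q. q permutes {0..<n}}. signof q * (h x (Hilbert_Choice.inv q p) * (\<Prod>i\<in>{0..<n} - {Hilbert_Choice.inv q p}. M i (q i)))))"
    by (subst sum.swap) (simp add: sum_distrib_left)
  also have "\<dots> = (\<Sum>x\<in>X. a x * det (mat n n (\<lambda>(i,j). if j = p then h x i else M i j)))"
  proof (rule sum.cong[OF refl])
    fix x
    have "det (mat n n (\<lambda>(i,j). if j = p then h x i else M i j)) =
      (\<Sum>q\<in>{q. q permutes {0..<n}}. signof q * (\<Prod>i=0..<n. (if q i = p then h x i else M i (q i))))"
      by (rule det_leibniz_fun)
    also have "\<dots> = (\<Sum>q\<in>{q. q permutes {0..<n}}. signof q * (h x (Hilbert_Choice.inv q p) * (\<Prod>i\<in>{0..<n} - {Hilbert_Choice.inv q p}. M i (q i))))"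
      by (rule sum.cong[OF refl]) (simp add: split)
    finally show "a x * (\<Sum>q\<in>{q. q permutes {0..<n}}. signof q * (h x (Hilbert_Choice.inv q p) * (\<Prod>i\<in>{0..<n} - {Hilbert_Choice.inv q p}. M i (q i)))) =
        a x * det (mat n n (\<lambda>(i,j). if j = p then h x i else M i j))" by simp
  qed
  finally show ?thesis .
qed

lemma det_cols_perm:
  fixes h :: "nat \<Rightarrow> 'x \<Rightarrow> 'a::comm_ring_1" and e :: "nat \<Rightarrow> 'x"
  assumes p: "p permutes {0..<n}"
  shows "det (mat n n (\<lambda>(i,k). h i (e (p k)))) = signof p * det (mat n n (\<lambda>(i,k). h i (e k)))"
  using det_rows_perm[OF p, of "\<lambda>c i. h i c" e] det_mat_transpose'[of n "\<lambda>i k. h k (e (p i))"]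
    det_mat_transpose'[of n "\<lambda>i k. h k (e i)"] by simp

locale sfw =
  fixes bd :: "'d::finite \<Rightarrow> 'e::finite \<Rightarrow> int" and V0 :: "'d set" and r :: nat and w :: "nat \<Rightarrow> 'd"
  assumes forest: "spanning_forest bd V0" and wbij: "bij_betw w {0..<r} V0"
begin

abbreviation D where "D \<equiv> Dchain bd V0"

definition T :: "(nat \<Rightarrow> 'd) \<Rightarrow> real mat" where
  "T f = mat r r (\<lambda>(i,p). D (f p) (w i))"

lemma T_carrier[simp]: "T f \<in> carrier_mat r r" unfolding T_def by simp

lemma D_supp: "supported_on (D e) V0" using Dchain_props[OF forest] by blast
lemma D_bd: "rbdry bd (D e) = rbdry bd (cell_chain e)" using Dchain_props[OF forest] by blast

lemma V0_w: "s \<in> V0 \<Longrightarrow> \<exists>i<r. s = w i"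
  using wbij unfolding bij_betw_def by auto

lemma w_in: "i < r \<Longrightarrow> w i \<in> V0" using wbij unfolding bij_betw_def by auto

lemma V0_ext:
  assumes "supported_on x V0" "supported_on y V0" "\<And>i. i < r \<Longrightarrow> x (w i) = y (w i)"
  shows "x = y"
proof (rule ext)
  fix s show "x s = y s"
  proof (cases "s \<in> V0")
    case True then obtain i where "i < r" "s = w i" using V0_w by blast
    then show ?thesis using assms by simp
  next
    case False then show ?thesis using assms supported_onD by metis
  qed
qed

definition E :: "(nat \<Rightarrow> real) \<Rightarrow> (nat \<Rightarrow> 'd) \<Rightarrow> 'd \<Rightarrow> real" where
  "E a f = (\<lambda>s. \<Sum>p=0..<r. a p * D (f p) s)"

definition C :: "(nat \<Rightarrow> real) \<Rightarrow> (nat \<Rightarrow> 'd) \<Rightarrow> 'd \<Rightarrow> real" where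
  "C a f = (\<lambda>s. \<Sum>p=0..<r. a p * cell_chain (f p) s)"

lemma E_supp: "supported_on (E a f) V0"
  using D_supp unfolding E_def supported_on_def by simp

lemma E_val: "i < r \<Longrightarrow> E a f (w i) = (T f *\<^sub>v vec r a) $ i"
  unfolding E_def T_def by (simp add: scalar_prod_def ac_simps)

lemma E_bd: "rbdry bd (E a f) = rbdry bd (C a f)"
  unfolding E_def C_def rbdry_sum D_bd ..

lemma C_supp: "f ` {0..<r} \<subseteq> V \<Longrightarrow> supported_on (C a f) V"
  unfolding C_def supported_on_def cell_chain_def by (auto intro!: sum.neutral)

lemma C_val: assumes "inj_on f {0..<r}" "p < r" shows "C a f (f p) = a p"
proof -
  have "C a f (f p) = (\<Sum>q=0..<r. if q = p then a q else 0)"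
    unfolding C_def cell_chain_def
    by (rule sum.cong[OF refl]) (use assms in \<open>auto simp: inj_on_def\<close>)
  then show ?thesis using assms by simp
qed

lemma C_repr:
  assumes fb: "bij_betw f {0..<r} V" and c: "supported_on c V"
  shows "C (\<lambda>p. c (f p)) f = c"
proof (rule ext)
  fix s show "C (\<lambda>p. c (f p)) f s = c s"
  proof (cases "s \<in> V")
    case True
    then obtain p where "p < r" "s = f p" using fb unfolding bij_betw_def by auto
    then show ?thesis using C_val fb unfolding bij_betw_def by auto
  next
    case False
    then have "C (\<lambda>p. c (f p)) f s = 0"
      using fb unfolding C_def cell_chain_def bij_betw_def by (auto intro!: sum.neutral)
    then show ?thesis using c False supported_onD by metis
  qed
qed

lemma forest_det_nonzero:
  assumes V: "spanning_forest bd V" and fb: "bij_betw f {0..<r} V"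
  shows "det (T f) \<noteq> 0"
proof
  assume "det (T f) = 0"
  then obtain v where v: "v \<in> carrier_vec r" "v \<noteq> 0\<^sub>v r" "T f *\<^sub>v v = 0\<^sub>v r"
    using det_0_iff_vec_prod_zero_field[OF T_carrier] by blast
  define a where "a p = v $ p" for p
  have va: "vec r a = v" using v(1) unfolding a_def by auto
  have "E a f = (\<lambda>s. 0)"
    by (rule V0_ext[OF E_supp]) (auto simp: supported_on_def E_val va v(3))
  then have "rbdry bd (C a f) = rbdry bd (\<lambda>s. 0)" using E_bd by metis
  moreover have "supported_on (C a f) V" using fb by (intro C_supp) (auto simp: bij_betw_def)
  ultimately have "C a f = (\<lambda>s. 0)"
    using forest_unique[OF V] by (auto simp: supported_on_def)
  then have "\<And>p. p < r \<Longrightarrow> a p = 0" using C_val fb unfolding bij_betw_def by metis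
  then have "v = 0\<^sub>v r" using v(1) unfolding a_def by (auto intro!: eq_vecI)
  then show False using v(2) by simp
qed

lemma det_nonzero_forest:
  assumes d: "det (T f) \<noteq> 0" and fb: "bij_betw f {0..<r} V"
  shows "spanning_forest bd V"
  unfolding spanning_forest_def
proof
  have kernel: "c = (\<lambda>s. 0)" if c: "supported_on c V" "rbdry bd c = (\<lambda>t. 0)" for c
  proof -
    define a where "a p = c (f p)" for p
    have Cc: "C a f = c" unfolding a_def by (rule C_repr[OF fb c(1)])
    have "E a f = (\<lambda>s. 0)"
      by (rule forest_unique[OF forest E_supp]) (auto simp: supported_on_def E_bd Cc c(2) rbdry_zero)
    have "(T f *\<^sub>v vec r a) $ i = 0" if "i < r" for i
      using E_val[OF that, of a f] \<open>E a f = (\<lambda>s. 0)\<close> by simp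
    then have "T f *\<^sub>v vec r a = 0\<^sub>v r"
      by (intro eq_vecI) (simp_all add: T_def)
    moreover have "\<not> (\<exists>v. v \<in> carrier_vec r \<and> v \<noteq> 0\<^sub>v r \<and> T f *\<^sub>v v = 0\<^sub>v r)"
      using det_0_iff_vec_prod_zero_field[OF T_carrier, of f] d by simp
    ultimately have "vec r a = 0\<^sub>v r"
      by (meson vec_carrier)
    have "a p = 0" if "p < r" for p
    proof -
      have "vec r a $ p = 0\<^sub>v r $ p" using \<open>vec r a = 0\<^sub>v r\<close> by simp
      then show ?thesis using that by simp
    qed
    then show ?thesis using Cc[symmetric] unfolding C_def by auto
  qed
  show "inj_on (rbdry bd) {c. supported_on c V}"
  proof (rule inj_onI)
    fix c1 c2 assume "c1 \<in> {c. supported_on c V}" "c2 \<in> {c. supported_on c V}" "rbdry bd c1 = rbdry bd c2"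
    then have "(\<lambda>s. c1 s - c2 s) = (\<lambda>s. 0)"
      by (intro kernel) (auto simp: supported_on_def rbdry_diff)
    show "c1 = c2"
    proof
      fix s show "c1 s = c2 s" using fun_cong[OF \<open>(\<lambda>s. c1 s - c2 s) = (\<lambda>s. 0)\<close>, of s] by simp
    qed
  qed
  show "rbdry bd ` {c. supported_on c V} = rbdry bd ` UNIV"
  proof
    show "rbdry bd ` {c. supported_on c V} \<subseteq> rbdry bd ` UNIV" by auto
    show "rbdry bd ` UNIV \<subseteq> rbdry bd ` {c. supported_on c V}"
    proof
      fix b assume "b \<in> rbdry bd ` UNIV"
      then obtain x where bx: "b = rbdry bd x" by auto
      obtain y where y: "supported_on y V0" "rbdry bd y = rbdry bd x"
        using forest_exists[OF forest] by blast
      define bv where "bv = vec r (\<lambda>i. y (w i))"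
      define v where "v = (1 / det (T f)) \<cdot>\<^sub>v (adj_mat (T f) *\<^sub>v bv)"
      have bvc: "bv \<in> carrier_vec r" unfolding bv_def by simp
      have adjc: "adj_mat (T f) \<in> carrier_mat r r" using adj_mat(1)[OF T_carrier] .
      have "T f *\<^sub>v v = (1 / det (T f)) \<cdot>\<^sub>v (T f *\<^sub>v (adj_mat (T f) *\<^sub>v bv))"
        unfolding v_def by (rule mult_mat_vec[OF T_carrier]) (use adjc bvc in simp)
      also have "T f *\<^sub>v (adj_mat (T f) *\<^sub>v bv) = (T f * adj_mat (T f)) *\<^sub>v bv"
        by (rule assoc_mult_mat_vec[symmetric, OF T_carrier adjc bvc])
      also have "T f * adj_mat (T f) = det (T f) \<cdot>\<^sub>m 1\<^sub>m r" by (rule adj_mat(2)[OF T_carrier])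
      also have "(det (T f) \<cdot>\<^sub>m 1\<^sub>m r) *\<^sub>v bv = det (T f) \<cdot>\<^sub>v bv"
        using bvc by (intro eq_vecI) (auto simp: smult_scalar_prod_distrib)
      also have "(1 / det (T f)) \<cdot>\<^sub>v (det (T f) \<cdot>\<^sub>v bv) = bv"
        using d bvc by (intro eq_vecI) auto
      finally have Tv: "T f *\<^sub>v v = bv" .
      define a where "a p = v $ p" for p
      have vc: "v \<in> carrier_vec r" unfolding v_def using adjc bvc by simp
      have va: "vec r a = v" unfolding a_def by (rule eq_vecI) (use vc in auto)
      have "E a f = y"
        by (rule V0_ext[OF E_supp y(1)]) (simp add: E_val va Tv bv_def)
      then have "rbdry bd (C a f) = b" using E_bd y(2) bx by metis
      moreover have "supported_on (C a f) V" using fb by (intro C_supp) (auto simp: bij_betw_def)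
      ultimately show "b \<in> rbdry bd ` {c. supported_on c V}" by auto
    qed
  qed
qed

end

lemma chain_repr:
  fixes g :: "nat \<Rightarrow> 'd"
  assumes fb: "bij_betw g {0..<m} V" and c: "supported_on c V"
  shows "(\<lambda>s. \<Sum>p=0..<m. c (g p) * cell_chain (g p) s) = c"
proof (rule ext)
  fix s show "(\<Sum>p=0..<m. c (g p) * cell_chain (g p) s) = c s"
  proof (cases "s \<in> V")
    case True
    then obtain p0 where p0: "p0 < m" "s = g p0" using fb unfolding bij_betw_def by auto
    have "(\<Sum>p=0..<m. c (g p) * cell_chain (g p) s) = (\<Sum>p=0..<m. if p = p0 then c s else 0)"
    proof (rule sum.cong[OF refl])
      fix p assume p: "p \<in> {0..<m}"
      have "g p = g p0 \<longleftrightarrow> p = p0"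
        by (rule inj_on_eq_iff[of g "{0..<m}"]) (use fb p p0(1) in \<open>auto simp: bij_betw_def\<close>)
      then show "c (g p) * cell_chain (g p) s = (if p = p0 then c s else 0)"
        using p0 by (auto simp: cell_chain_def)
    qed
    then show ?thesis using p0 by simp
  next
    case False
    then have "(\<Sum>p=0..<m. c (g p) * cell_chain (g p) s) = 0"
      using fb unfolding cell_chain_def bij_betw_def by (auto intro!: sum.neutral)
    then show ?thesis using c False supported_onD by metis
  qed
qed

lemma det_cols_noninj:
  fixes h :: "nat \<Rightarrow> 'x \<Rightarrow> 'a::comm_ring_1"
  assumes "\<not> inj_on f {0..<n}"
  shows "det (mat n n (\<lambda>(i,k). h i (f k))) = 0"
  using det_rows_noninj[OF assms, of "\<lambda>c i. h i c"] det_mat_transpose'[of n "\<lambda>i k. h k (f i)"] by simp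

context sfw begin

lemma r_card: "card V0 = r" using wbij bij_betw_same_card by fastforce

lemma T_perm:
  assumes f: "bij_betw f {0..<r} V" and g: "bij_betw g {0..<r} V"
  shows "\<bar>det (T g)\<bar> = \<bar>det (T f)\<bar>"
proof -
  define q where "q = (\<lambda>p. if p < r then inv_into {0..<r} f (g p) else p)"
  have "bij_betw (inv_into {0..<r} f \<circ> g) {0..<r} {0..<r}"
    by (rule bij_betw_trans[OF g bij_betw_inv_into[OF f]])
  then have "bij_betw q {0..<r} {0..<r}"
    by (rule bij_betw_cong[THEN iffD1, rotated]) (auto simp: q_def)
  then have qp: "q permutes {0..<r}" by (rule bij_imp_permutes) (auto simp: q_def)
  have gq: "g p = f (q p)" if "p < r" for p
  proof -
    have "g p \<in> V" using g that unfolding bij_betw_def by auto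
    then show ?thesis using that f unfolding q_def by (simp add: bij_betw_inv_into_right)
  qed
  have "T g = mat r r (\<lambda>(i,k). D (f (q k)) (w i))"
    unfolding T_def by (rule mat_eq_on) (simp add: gq)
  then have "det (T g) = signof q * det (T f)"
    unfolding T_def using det_cols_perm[OF qp, of "\<lambda>i s. D s (w i)" f] by simp
  then show ?thesis by (simp add: sign_def abs_mult)
qed

lemma T_w: "det (T w) = 1"
proof -
  have "T w = 1\<^sub>m r"
    unfolding T_def
  proof (rule eq_matI)
    fix i j assume ij: "i < dim_row (1\<^sub>m r)" "j < dim_col (1\<^sub>m r)"
    then have "D (w j) (w i) = cell_chain (w j) (w i)" using Dchain_V0[OF forest w_in] by simp
    also have "\<dots> = (if i = j then 1 else 0)"
      using wbij ij unfolding cell_chain_def bij_betw_def inj_on_def by auto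
    finally show "mat r r (\<lambda>(i,p). D (w p) (w i)) $$ (i, j) = 1\<^sub>m r $$ (i, j)" using ij by simp
  qed auto
  then show ?thesis by simp
qed

lemma forest_card:
  assumes V: "spanning_forest bd V"
  shows "card V = r"
proof -
  define m where "m = card V"
  obtain g where g: "bij_betw g {0..<m} V"
    using finite_same_card_bij[of "{0..<m}" V] unfolding m_def by auto
  have "\<forall>i. \<exists>c. supported_on c V \<and> rbdry bd c = rbdry bd (cell_chain (w i))"
    using forest_exists[OF V] by blast
  then obtain F where F: "\<And>i. supported_on (F i) V" "\<And>i. rbdry bd (F i) = rbdry bd (cell_chain (w i))"
    by metis
  have ginj: "inj_on g {0..<m}" using g unfolding bij_betw_def by auto
  have claim1: "(\<Sum>p=0..<m. D (g p) (w i) * F i' (g p)) = (if i = i' then 1 else 0)"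
    if i: "i < r" "i' < r" for i i'
  proof -
    define Y where "Y = (\<lambda>s. \<Sum>p=0..<m. F i' (g p) * D (g p) s)"
    have "supported_on Y V0" unfolding Y_def using D_supp by (auto simp: supported_on_def)
    moreover have "rbdry bd Y = rbdry bd (cell_chain (w i'))"
    proof -
      have "rbdry bd Y = (\<lambda>t. \<Sum>p=0..<m. F i' (g p) * rbdry bd (cell_chain (g p)) t)"
        unfolding Y_def rbdry_sum D_bd ..
      also have "\<dots> = rbdry bd (\<lambda>s. \<Sum>p=0..<m. F i' (g p) * cell_chain (g p) s)"
        unfolding rbdry_sum ..
      also have "(\<lambda>s. \<Sum>p=0..<m. F i' (g p) * cell_chain (g p) s) = F i'"
        by (rule chain_repr[OF g F(1)])
      finally show ?thesis using F(2) by simp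
    qed
    ultimately have "Y = cell_chain (w i')"
      using forest_unique[OF forest _ supported_cell[OF w_in[OF i(2)]]] by blast
    then have "Y (w i) = (if i = i' then 1 else 0)"
      using wbij i unfolding cell_chain_def bij_betw_def inj_on_def by auto
    then show ?thesis unfolding Y_def by (simp add: ac_simps)
  qed
  have claim2: "(\<Sum>i=0..<r. F i (g p) * D (g p') (w i)) = (if p = p' then 1 else 0)"
    if p: "p < m" "p' < m" for p p'
  proof -
    define Z where "Z = (\<lambda>s. \<Sum>i=0..<r. D (g p') (w i) * F i s)"
    have gp': "g p' \<in> V" using g p unfolding bij_betw_def by auto
    have "supported_on Z V" unfolding Z_def using F(1) by (auto simp: supported_on_def)
    moreover have "rbdry bd Z = rbdry bd (cell_chain (g p'))"
    proof -
      have "rbdry bd Z = (\<lambda>t. \<Sum>i=0..<r. D (g p') (w i) * rbdry bd (cell_chain (w i)) t)"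
        unfolding Z_def rbdry_sum F(2) ..
      also have "\<dots> = rbdry bd (\<lambda>s. \<Sum>i=0..<r. D (g p') (w i) * cell_chain (w i) s)"
        unfolding rbdry_sum ..
      also have "(\<lambda>s. \<Sum>i=0..<r. D (g p') (w i) * cell_chain (w i) s) = D (g p')"
        by (rule chain_repr[OF wbij D_supp])
      finally show ?thesis using D_bd by simp
    qed
    ultimately have "Z = cell_chain (g p')"
      using forest_unique[OF V _ supported_cell[OF gp']] by blast
    then have "Z (g p) = (if p = p' then 1 else 0)"
      using ginj p unfolding cell_chain_def inj_on_def by auto
    then show ?thesis unfolding Z_def by (simp add: ac_simps)
  qed
  have "real r = (\<Sum>i=0..<r. \<Sum>p=0..<m. D (g p) (w i) * F i (g p))"
    using claim1 by simp
  also have "\<dots> = (\<Sum>p=0..<m. \<Sum>i=0..<r. F i (g p) * D (g p) (w i))"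
    by (subst sum.swap) (simp add: ac_simps)
  also have "\<dots> = real m" using claim2 by simp
  finally show ?thesis unfolding m_def by simp
qed

end

definition cls :: "('e \<Rightarrow> int) set \<Rightarrow> ('e \<Rightarrow> int) \<Rightarrow> ('e \<Rightarrow> int) set" where
  "cls G y = {y'. (\<lambda>t. y t - y' t) \<in> G}"

definition grp :: "('e \<Rightarrow> int) set \<Rightarrow> bool" where
  "grp G \<longleftrightarrow> (\<lambda>t. 0) \<in> G \<and> (\<forall>b1\<in>G. \<forall>b2\<in>G. \<forall>m::int. (\<lambda>t. b1 t + m * b2 t) \<in> G)"

lemma grp_lin: "grp G \<Longrightarrow> b1 \<in> G \<Longrightarrow> b2 \<in> G \<Longrightarrow> (\<lambda>t. b1 t + m * b2 t) \<in> G"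
  unfolding grp_def by blast

lemma grp_0: "grp G \<Longrightarrow> (\<lambda>t. 0) \<in> G"
  unfolding grp_def by blast

lemma grp_smult: assumes G: "grp G" and b: "b \<in> G" shows "(\<lambda>t. m * b t) \<in> G"
  using grp_lin[OF G grp_0[OF G] b, of m] by simp

lemma grp_add: "grp G \<Longrightarrow> b1 \<in> G \<Longrightarrow> b2 \<in> G \<Longrightarrow> (\<lambda>t. b1 t + b2 t) \<in> G"
  using grp_lin[of G b1 b2 1] by simp

lemma grp_diff: "grp G \<Longrightarrow> b1 \<in> G \<Longrightarrow> b2 \<in> G \<Longrightarrow> (\<lambda>t. b1 t - b2 t) \<in> G"
  using grp_lin[of G b1 b2 "-1"] by simp

lemma cls_eq:
  assumes G: "grp G"
  shows "cls G y = cls G y' \<longleftrightarrow> (\<lambda>t. y t - y' t) \<in> G"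
proof
  assume "cls G y = cls G y'"
  moreover have "y' \<in> cls G y'" unfolding cls_def using grp_0[OF G] by simp
  ultimately show "(\<lambda>t. y t - y' t) \<in> G" unfolding cls_def by auto
next
  assume h: "(\<lambda>t. y t - y' t) \<in> G"
  have "z \<in> cls G y \<longleftrightarrow> z \<in> cls G y'" for z
  proof
    assume "z \<in> cls G y"
    then have "(\<lambda>t. y t - z t) \<in> G" unfolding cls_def by simp
    from grp_diff[OF G this h] show "z \<in> cls G y'" unfolding cls_def by simp
  next
    assume "z \<in> cls G y'"
    then have "(\<lambda>t. y' t - z t) \<in> G" unfolding cls_def by simp
    from grp_add[OF G h this] show "z \<in> cls G y" unfolding cls_def by simp
  qed
  then show "cls G y = cls G y'" by blast
qed

lemma count_classes:
  fixes Bs :: "('e \<Rightarrow> int) set" and x :: "'e \<Rightarrow> int" and n :: nat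
  assumes B: "grp Bs"
    and n: "n > 0" and nx: "(\<lambda>t. int n * x t) \<in> Bs"
    and nmin: "\<And>m::nat. 0 < m \<Longrightarrow> m < n \<Longrightarrow> (\<lambda>t. int m * x t) \<notin> Bs"
    and L: "\<And>y m. y \<in> L \<Longrightarrow> (\<lambda>t. y t + m * x t) \<in> L"
    and fin: "finite (cls Bs ` L)"
    and Ns: "Ns = {(\<lambda>t. b t + m * x t) | b m. b \<in> Bs}"
  shows "card (cls Bs ` L) = n * card (cls Ns ` L)"
proof -
  have BN: "Bs \<subseteq> Ns"
  proof
    fix b assume b: "b \<in> Bs"
    show "b \<in> Ns" unfolding Ns by (intro CollectI exI[of _ b] exI[of _ 0]) (simp add: b)
  qed
  have x0N: "(\<lambda>t. 0 + m * x t) \<in> Ns" for m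
    unfolding Ns by (intro CollectI exI[of _ "\<lambda>t. 0"] exI[of _ m]) (simp add: grp_0[OF B])
  have N: "grp Ns"
    unfolding grp_def
  proof (intro conjI ballI allI)
    show "(\<lambda>t. 0) \<in> Ns" using x0N[of 0] by simp
    fix b1 b2 m assume "b1 \<in> Ns" "b2 \<in> Ns"
    then obtain c1 m1 c2 m2 where c: "c1 \<in> Bs" "c2 \<in> Bs" "b1 = (\<lambda>t. c1 t + m1 * x t)" "b2 = (\<lambda>t. c2 t + m2 * x t)"
      unfolding Ns by blast
    have "(\<lambda>t. b1 t + m * b2 t) = (\<lambda>t. (c1 t + m * c2 t) + (m1 + m * m2) * x t)"
      unfolding c by (simp add: algebra_simps)
    moreover have "(\<lambda>t. c1 t + m * c2 t) \<in> Bs" using grp_lin[OF B c(1,2)] .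
    ultimately show "(\<lambda>t. b1 t + m * b2 t) \<in> Ns" unfolding Ns
      by (intro CollectI exI[of _ "\<lambda>t. c1 t + m * c2 t"] exI[of _ "m1 + m * m2"]) simp
  qed
  define piece where "piece C = cls Bs ` {y\<in>L. cls Ns y = C}" for C
  have union: "cls Bs ` L = (\<Union>C\<in>cls Ns ` L. piece C)"
  proof (intro equalityI subsetI)
    fix Q assume "Q \<in> cls Bs ` L"
    then obtain y where y: "y \<in> L" "Q = cls Bs y" by blast
    have "Q \<in> piece (cls Ns y)" unfolding piece_def using y by blast
    moreover have "cls Ns y \<in> cls Ns ` L" using y by blast
    ultimately show "Q \<in> (\<Union>C\<in>cls Ns ` L. piece C)" by blast
  next
    fix Q assume "Q \<in> (\<Union>C\<in>cls Ns ` L. piece C)"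
    then show "Q \<in> cls Bs ` L" unfolding piece_def by blast
  qed
  define \<psi> where "\<psi> Q = {z. \<exists>y\<in>Q. z \<in> cls Ns y}" for Q
  have psi: "\<psi> (cls Bs y) = cls Ns y" for y
  proof -
    have "cls Ns y' = cls Ns y" if "y' \<in> cls Bs y" for y'
    proof -
      have "(\<lambda>t. y t - y' t) \<in> Bs" using that unfolding cls_def by simp
      then have "(\<lambda>t. y t - y' t) \<in> Ns" using BN by blast
      then show ?thesis using cls_eq[OF N, of y' y] grp_smult[OF N, of "\<lambda>t. y t - y' t" "-1"] by simp
    qed
    moreover have "y \<in> cls Bs y" unfolding cls_def using grp_0[OF B] by simp
    ultimately show ?thesis unfolding \<psi>_def by blast
  qed
  have "\<psi> ` (cls Bs ` L) = (\<lambda>y. \<psi> (cls Bs y)) ` L" by (simp add: image_image)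
  also have "\<dots> = cls Ns ` L" unfolding psi ..
  finally have "cls Ns ` L = \<psi> ` (cls Bs ` L)" by simp
  then have finN: "finite (cls Ns ` L)" using fin by simp
  have piece_card: "card (piece C) = n" if C: "C \<in> cls Ns ` L" for C
  proof -
    obtain y0 where y0: "y0 \<in> L" "C = cls Ns y0" using C by auto
    define g where "g m = cls Bs (\<lambda>t. y0 t + int m * x t)" for m :: nat
    have "piece C = g ` {0..<n}"
    proof
      show "g ` {0..<n} \<subseteq> piece C"
      proof
        fix Q assume "Q \<in> g ` {0..<n}"
        then obtain m where Q: "Q = g m" by auto
        have "(\<lambda>t. y0 t + int m * x t) \<in> L" using L[OF y0(1)] .
        moreover have "cls Ns (\<lambda>t. y0 t + int m * x t) = C"
        proof -
          have "(\<lambda>t. (y0 t + int m * x t) - y0 t) = (\<lambda>t. 0 + int m * x t)" by simp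
          moreover have "(\<lambda>t. 0 + int m * x t) \<in> Ns" by (rule x0N)
          ultimately show ?thesis unfolding y0(2) using cls_eq[OF N] by simp
        qed
        ultimately show "Q \<in> piece C" unfolding piece_def Q g_def by auto
      qed
      show "piece C \<subseteq> g ` {0..<n}"
      proof
        fix Q assume "Q \<in> piece C"
        then obtain y where y: "y \<in> L" "cls Ns y = cls Ns y0" "Q = cls Bs y"
          unfolding piece_def y0(2) by auto
        then have "(\<lambda>t. y t - y0 t) \<in> Ns" using cls_eq[OF N] by simp
        then obtain b m where bm: "b \<in> Bs" "(\<lambda>t. y t - y0 t) = (\<lambda>t. b t + m * x t)"
          unfolding Ns by blast
        define m' where "m' = nat (m mod int n)"
        have m'n: "m' < n" unfolding m'_def using n by (simp add: nat_less_iff)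
        have mm: "int m' = m mod int n" unfolding m'_def using n by simp
        have "(\<lambda>t. y t - (y0 t + int m' * x t)) = (\<lambda>t. b t + (m div int n) * (int n * x t))"
        proof
          fix t
          have "y t - y0 t = b t + m * x t" using fun_cong[OF bm(2), of t] by simp
          moreover have "m = (m div int n) * int n + int m'" unfolding mm by simp
          ultimately have e: "y t - y0 t = b t + m * x t" "m - int m' = (m div int n) * int n" by linarith+
          have "y t - (y0 t + int m' * x t) = b t + (m - int m') * x t" using e(1) by (simp add: algebra_simps)
          also have "\<dots> = b t + (m div int n) * (int n * x t)" unfolding e(2) by (simp add: algebra_simps)
          finally show "y t - (y0 t + int m' * x t) = b t + (m div int n) * (int n * x t)" .
        qed
        moreover have "(\<lambda>t. b t + (m div int n) * (int n * x t)) \<in> Bs"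
          using grp_lin[OF B bm(1) nx] .
        ultimately have "Q = g m'" unfolding y(3) g_def using cls_eq[OF B] by simp
        then show "Q \<in> g ` {0..<n}" using m'n by auto
      qed
    qed
    moreover have "inj_on g {0..<n}"
    proof (rule inj_onI)
      fix m1 m2 assume m: "m1 \<in> {0..<n}" "m2 \<in> {0..<n}" "g m1 = g m2"
      then have d: "(\<lambda>t. (y0 t + int m1 * x t) - (y0 t + int m2 * x t)) \<in> Bs"
        unfolding g_def using cls_eq[OF B] by simp
      show "m1 = m2"
      proof (rule ccontr)
        assume ne: "m1 \<noteq> m2"
        show False
        proof (cases "m1 < m2")
          case True
          have "(\<lambda>t. int (m2 - m1) * x t) = (\<lambda>t. (-1) * ((y0 t + int m1 * x t) - (y0 t + int m2 * x t)))"
            using True by (auto simp: algebra_simps of_nat_diff)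
          moreover have "(\<lambda>t. (-1) * ((y0 t + int m1 * x t) - (y0 t + int m2 * x t))) \<in> Bs"
            by (rule grp_smult[OF B d])
          ultimately have "(\<lambda>t. int (m2 - m1) * x t) \<in> Bs" by simp
          moreover have lt: "0 < m2 - m1" "m2 - m1 < n" using True m by auto
          ultimately show False using nmin[OF lt] by blast
        next
          case False
          then have "m2 < m1" using ne by simp
          have "(\<lambda>t. int (m1 - m2) * x t) = (\<lambda>t. ((y0 t + int m1 * x t) - (y0 t + int m2 * x t)))"
            using \<open>m2 < m1\<close> by (auto simp: algebra_simps of_nat_diff)
          then have "(\<lambda>t. int (m1 - m2) * x t) \<in> Bs" using d by simp
          moreover have lt: "0 < m1 - m2" "m1 - m2 < n" using \<open>m2 < m1\<close> m by auto
          ultimately show False using nmin[OF lt] by blast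
        qed
      qed
    qed
    ultimately show ?thesis by (simp add: card_image)
  qed
  have disj: "piece C1 \<inter> piece C2 = {}" if "C1 \<in> cls Ns ` L" "C2 \<in> cls Ns ` L" "C1 \<noteq> C2" for C1 C2
  proof -
    have "False" if Q1: "Q \<in> piece C1" and Q2: "Q \<in> piece C2" for Q
    proof -
      obtain y1 where y1: "cls Ns y1 = C1" "Q = cls Bs y1"
        using Q1 unfolding piece_def by blast
      obtain y2 where y2: "cls Ns y2 = C2" "Q = cls Bs y2"
        using Q2 unfolding piece_def by blast
      have y: "cls Ns y1 = C1" "cls Ns y2 = C2" using y1 y2 by auto
      have "cls Bs y1 = cls Bs y2" using y1 y2 by simp
      then have "(\<lambda>t. y1 t - y2 t) \<in> Bs" using cls_eq[OF B, of y1 y2] by simp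
      then have "(\<lambda>t. y1 t - y2 t) \<in> Ns" using BN by blast
      then have "cls Ns y1 = cls Ns y2" using cls_eq[OF N, of y1 y2] by simp
      then show False using y \<open>C1 \<noteq> C2\<close> by simp
    qed
    then show ?thesis by blast
  qed
  have finP: "finite (piece C)" if "C \<in> cls Ns ` L" for C
    using fin unfolding piece_def by (rule finite_subset[rotated]) auto
  have "card (cls Bs ` L) = (\<Sum>C\<in>cls Ns ` L. card (piece C))"
    unfolding union by (rule card_UN_disjoint) (use finN finP disj in auto)
  also have "\<dots> = (\<Sum>C\<in>cls Ns ` L. n)" using piece_card by simp
  finally show ?thesis by simp
qed

definition Mb :: "('d::finite \<Rightarrow> 'e::finite \<Rightarrow> int) \<Rightarrow> int" where
  "Mb bd = (\<Sum>s\<in>UNIV. \<Sum>t\<in>UNIV. \<bar>bd s t\<bar>)"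

lemma rbdry_bound:
  assumes x: "\<And>s. \<bar>x s\<bar> \<le> 1"
  shows "\<bar>rbdry bd x t\<bar> \<le> real_of_int (Mb bd)"
proof -
  have "\<bar>rbdry bd x t\<bar> \<le> (\<Sum>s\<in>UNIV. \<bar>x s * real_of_int (bd s t)\<bar>)"
    unfolding rbdry_def by (rule sum_abs)
  also have "\<dots> \<le> (\<Sum>s\<in>UNIV. real_of_int (\<Sum>t'\<in>UNIV. \<bar>bd s t'\<bar>))"
  proof (rule sum_mono)
    fix s
    have "\<bar>x s * real_of_int (bd s t)\<bar> \<le> 1 * \<bar>real_of_int (bd s t)\<bar>"
      unfolding abs_mult by (rule mult_right_mono[OF x]) simp
    also have "\<dots> \<le> real_of_int (\<Sum>t'\<in>UNIV. \<bar>bd s t'\<bar>)"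
    proof -
      have "\<bar>bd s t\<bar> \<le> (\<Sum>t'\<in>UNIV. \<bar>bd s t'\<bar>)"
        using member_le_sum[of t UNIV "\<lambda>t'. \<bar>bd s t'\<bar>"] by simp
      then have "real_of_int \<bar>bd s t\<bar> \<le> real_of_int (\<Sum>t'\<in>UNIV. \<bar>bd s t'\<bar>)" by linarith
      then show ?thesis by simp
    qed
    finally show "\<bar>x s * real_of_int (bd s t)\<bar> \<le> real_of_int (\<Sum>t'\<in>UNIV. \<bar>bd s t'\<bar>)" .
  qed
  also have "\<dots> = real_of_int (Mb bd)" unfolding Mb_def by simp
  finally show ?thesis .
qed

lemma finite_bounded_int_funs: "finite {z :: 'e::finite \<Rightarrow> int. \<forall>t. \<bar>z t\<bar> \<le> M}"
proof -
  have "{z :: 'e \<Rightarrow> int. \<forall>t. \<bar>z t\<bar> \<le> M} \<subseteq> Pi\<^sub>E UNIV (\<lambda>_. {-M..M})"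
    by (auto simp: PiE_UNIV_domain Pi_def abs_le_iff) (metis minus_le_iff)
  moreover have "finite (Pi\<^sub>E (UNIV::'e set) (\<lambda>_. {-M..M}))" by (rule finite_PiE) auto
  ultimately show ?thesis by (rule finite_subset)
qed

lemma floor_decomp:
  fixes c :: "'d::finite \<Rightarrow> real"
  shows "rbdry bd (\<lambda>s. c s - real_of_int \<lfloor>c s\<rfloor>) = (\<lambda>t. rbdry bd c t - real_of_int (ibdry bd (\<lambda>s. \<lfloor>c s\<rfloor>) t))"
  unfolding rbdry_diff rbdry_of_int ..

lemma frac_bound: "\<bar>(x::real) - real_of_int \<lfloor>x\<rfloor>\<bar> \<le> 1"
  by (smt (verit) of_int_floor_le real_of_int_floor_add_one_gt)

lemma rational_coeffs:
  fixes c :: "'d::finite \<Rightarrow> real" and bd :: "'d \<Rightarrow> 'e::finite \<Rightarrow> int"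
  assumes inj: "inj_on (rbdry bd) {c. supported_on c V}" and c: "supported_on c V"
    and z: "rbdry bd c = (\<lambda>t. real_of_int (z t))"
  shows "\<exists>k::int. k > 0 \<and> (\<exists>ci. supported_on ci V \<and> (\<lambda>s. real_of_int k * c s) = (\<lambda>s. real_of_int (ci s)))"
proof -
  define fr where "fr m = (\<lambda>s. real m * c s - real_of_int \<lfloor>real m * c s\<rfloor>)" for m :: nat
  define zz where "zz m = (\<lambda>t. int m * z t - ibdry bd (\<lambda>s. \<lfloor>real m * c s\<rfloor>) t)" for m :: nat
  have frz: "rbdry bd (fr m) = (\<lambda>t. real_of_int (zz m t))" for m
    unfolding fr_def zz_def floor_decomp rbdry_scale z by simp
  have frs: "supported_on (fr m) V" for m
    using c unfolding fr_def supported_on_def by simp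
  have zzb: "zz m \<in> {z :: 'e \<Rightarrow> int. \<forall>t. \<bar>z t\<bar> \<le> Mb bd}" for m
  proof -
    have "\<bar>real_of_int (zz m t)\<bar> \<le> real_of_int (Mb bd)" for t
    proof -
      have "\<bar>rbdry bd (fr m) t\<bar> \<le> real_of_int (Mb bd)"
        by (rule rbdry_bound) (unfold fr_def, rule frac_bound)
      then show ?thesis unfolding frz by simp
    qed
    then show ?thesis by (simp del: of_int_abs add: of_int_abs[symmetric])
  qed
  have "\<not> inj zz"
  proof
    assume "inj zz"
    then have "finite (UNIV :: nat set)"
      using finite_subset[OF _ finite_bounded_int_funs[of "Mb bd"]] zzb
      by (metis finite_imageD image_subsetI)
    then show False by simp
  qed
  then obtain m1 m2 where m: "m1 \<noteq> m2" "zz m1 = zz m2" unfolding inj_def by blast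
  have "\<exists>m1 m2. m1 < m2 \<and> zz m1 = zz m2"
  proof (cases "m1 < m2")
    case True then show ?thesis using m by blast
  next
    case False then have "m2 < m1" using m by simp
    then show ?thesis using m by metis
  qed
  then obtain a b where ab: "a < b" "zz a = zz b" by blast
  have "fr a = fr b"
    using inj frs frz ab(2) unfolding inj_on_def by auto
  then have eq: "real b * c s - real a * c s = real_of_int (\<lfloor>real b * c s\<rfloor> - \<lfloor>real a * c s\<rfloor>)" for s
    unfolding fr_def by (drule_tac fun_cong[of _ _ s]) simp
  define ci where "ci s = \<lfloor>real b * c s\<rfloor> - \<lfloor>real a * c s\<rfloor>" for s
  have "supported_on ci V" using c unfolding ci_def supported_on_def by simp
  moreover have "(\<lambda>s. real_of_int (int b - int a) * c s) = (\<lambda>s. real_of_int (ci s))"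
    using eq unfolding ci_def by (auto simp: algebra_simps)
  moreover have "int b - int a > 0" using ab by simp
  ultimately show ?thesis by blast
qed

definition Lt :: "('d::finite \<Rightarrow> 'e::finite \<Rightarrow> int) \<Rightarrow> ('e \<Rightarrow> 'f \<Rightarrow> int) \<Rightarrow> ('e \<Rightarrow> int) set" where
  "Lt bd bd' = {z \<in> cycles_dm1 bd'. \<exists>c. rbdry bd c = (\<lambda>t. real_of_int (z t))}"

definition TS :: "('d::finite \<Rightarrow> 'e::finite \<Rightarrow> int) \<Rightarrow> ('e \<Rightarrow> 'f \<Rightarrow> int) \<Rightarrow> 'd set \<Rightarrow> ('e \<Rightarrow> int) set" where
  "TS bd bd' V = {z \<in> cycles_dm1 bd'. \<exists>k::int. k > 0 \<and> (\<lambda>t. k * z t) \<in> bounds_dm1 bd V}"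

lemma torsion_order_cls:
  "torsion_order bd bd' V = card (cls (bounds_dm1 bd V) ` TS bd bd' V)"
proof -
  have "TS bd bd' V // {(x, y). (\<lambda>t. x t - y t) \<in> bounds_dm1 bd V} = cls (bounds_dm1 bd V) ` TS bd bd' V"
    unfolding quotient_def cls_def by auto
  then show ?thesis unfolding torsion_order_def TS_def by simp
qed

lemma bounds_grp: "grp (bounds_dm1 bd V)"
  unfolding grp_def
proof (intro conjI ballI allI)
  show "(\<lambda>t. 0) \<in> bounds_dm1 bd V"
    unfolding bounds_dm1_def
    by (rule CollectI, rule exI[of _ "\<lambda>s. 0"]) (auto simp: ibdry_def supported_on_def)
  fix b1 b2 and m :: int
  assume "b1 \<in> bounds_dm1 bd V" "b2 \<in> bounds_dm1 bd V"
  then obtain c1 c2 where c: "b1 = ibdry bd c1" "supported_on c1 V" "b2 = ibdry bd c2" "supported_on c2 V"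
    unfolding bounds_dm1_def by auto
  have "(\<lambda>t. b1 t + m * b2 t) = ibdry bd (\<lambda>s. 1 * c1 s + m * c2 s)"
    unfolding ibdry_lin c by simp
  moreover have "supported_on (\<lambda>s. 1 * c1 s + m * c2 s) V" using c unfolding supported_on_def by simp
  ultimately show "(\<lambda>t. b1 t + m * b2 t) \<in> bounds_dm1 bd V" unfolding bounds_dm1_def by blast
qed

lemma bounds_insert:
  assumes "s \<notin> V"
  shows "{(\<lambda>t. b t + m * bd s t) | b m. b \<in> bounds_dm1 bd V} = bounds_dm1 bd (insert s V)"
proof
  show "{(\<lambda>t. b t + m * bd s t) | b m. b \<in> bounds_dm1 bd V} \<subseteq> bounds_dm1 bd (insert s V)"
  proof
    fix u assume "u \<in> {(\<lambda>t. b t + m * bd s t) | b m. b \<in> bounds_dm1 bd V}"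
    then obtain c m where c: "u = (\<lambda>t. ibdry bd c t + m * bd s t)" "supported_on c V"
      unfolding bounds_dm1_def by auto
    have "u = ibdry bd (\<lambda>s'. 1 * c s' + m * icell s s')"
      unfolding ibdry_lin ibdry_icell c by simp
    moreover have "supported_on (\<lambda>s'. 1 * c s' + m * icell s s') (insert s V)"
      using c unfolding supported_on_def icell_def by auto
    ultimately show "u \<in> bounds_dm1 bd (insert s V)" unfolding bounds_dm1_def by blast
  qed
  show "bounds_dm1 bd (insert s V) \<subseteq> {(\<lambda>t. b t + m * bd s t) | b m. b \<in> bounds_dm1 bd V}"
  proof
    fix u assume "u \<in> bounds_dm1 bd (insert s V)"
    then obtain c where c: "u = ibdry bd c" "supported_on c (insert s V)"
      unfolding bounds_dm1_def by auto
    define c0 where "c0 = (\<lambda>s'. c s' - c s * icell s s')"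
    have "supported_on c0 V" using c(2) unfolding c0_def supported_on_def icell_def by auto
    moreover have "u = (\<lambda>t. ibdry bd c0 t + c s * bd s t)"
      unfolding c0_def ibdry_diff c(1)
    proof -
      have "ibdry bd (\<lambda>s'. c s * icell s s') = (\<lambda>t. c s * bd s t)"
        using ibdry_lin[of bd "c s" "icell s" 0 "icell s"] by (simp add: ibdry_icell)
      then show "ibdry bd c = (\<lambda>t. ibdry bd c t - ibdry bd (\<lambda>s'. c s * icell s s') t + c s * bd s t)"
        by simp
    qed
    ultimately show "u \<in> {(\<lambda>t. b t + m * bd s t) | b m. b \<in> bounds_dm1 bd V}"
      unfolding bounds_dm1_def by blast
  qed
qed

lemma Lt_closed:
  assumes cc: "\<And>s u. (\<Sum>t\<in>UNIV. bd s t * bd' t u) = 0" and y: "y \<in> Lt bd bd'"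
  shows "(\<lambda>t. y t + m * bd s t) \<in> Lt bd bd'"
proof -
  obtain c where c: "rbdry bd c = (\<lambda>t. real_of_int (y t))" and yc: "y \<in> cycles_dm1 bd'"
    using y unfolding Lt_def by auto
  have "rbdry bd (\<lambda>s'. 1 * c s' + real_of_int m * cell_chain s s') = (\<lambda>t. real_of_int (y t + m * bd s t))"
    unfolding rbdry_lin c rbdry_cell by simp
  moreover have "(\<lambda>t. y t + m * bd s t) \<in> cycles_dm1 bd'"
  proof -
    have "ibdry bd' (\<lambda>t. 1 * y t + m * bd s t) = (\<lambda>u. 0)"
      unfolding ibdry_lin using yc cc unfolding cycles_dm1_def ibdry_def by simp
    then show ?thesis unfolding cycles_dm1_def by simp
  qed
  ultimately show ?thesis unfolding Lt_def by blast
qed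

lemma TS_eq_Lt:
  assumes V: "spanning_forest bd V"
  shows "TS bd bd' V = Lt bd bd'"
proof
  show "TS bd bd' V \<subseteq> Lt bd bd'"
  proof
    fix z assume "z \<in> TS bd bd' V"
    then obtain k ci where z: "z \<in> cycles_dm1 bd'" "k > 0" "(\<lambda>t. k * z t) = ibdry bd ci"
      unfolding TS_def bounds_dm1_def by auto
    have "rbdry bd (\<lambda>s. (1 / real_of_int k) * real_of_int (ci s)) = (\<lambda>t. real_of_int (z t))"
    proof -
      have "rbdry bd (\<lambda>s. (1 / real_of_int k) * real_of_int (ci s)) = (\<lambda>t. (1 / real_of_int k) * real_of_int (ibdry bd ci t))"
        unfolding rbdry_scale rbdry_of_int ..
      also have "\<dots> = (\<lambda>t. real_of_int (z t))"
      proof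
        fix t
        have "ibdry bd ci t = k * z t" using fun_cong[OF z(3), of t] by simp
        then show "(1 / real_of_int k) * real_of_int (ibdry bd ci t) = real_of_int (z t)" using z(2) by simp
      qed
      finally show ?thesis .
    qed
    then show "z \<in> Lt bd bd'" unfolding Lt_def using z(1) by blast
  qed
  show "Lt bd bd' \<subseteq> TS bd bd' V"
  proof
    fix z assume "z \<in> Lt bd bd'"
    then obtain x where z: "z \<in> cycles_dm1 bd'" "rbdry bd x = (\<lambda>t. real_of_int (z t))"
      unfolding Lt_def by auto
    obtain c where c: "supported_on c V" "rbdry bd c = rbdry bd x" using forest_exists[OF V] by blast
    obtain k ci where k: "k > 0" "supported_on ci V" "(\<lambda>s. real_of_int k * c s) = (\<lambda>s. real_of_int (ci s))"
      using rational_coeffs[of bd V c z] V c z unfolding spanning_forest_def by auto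
    have "(\<lambda>t. real_of_int (ibdry bd ci t)) = (\<lambda>t. real_of_int (k * z t))"
    proof -
      have "(\<lambda>t. real_of_int (ibdry bd ci t)) = rbdry bd (\<lambda>s. real_of_int k * c s)"
        unfolding k(3) rbdry_of_int ..
      also have "\<dots> = (\<lambda>t. real_of_int (k * z t))" unfolding rbdry_scale c(2) z(2) by simp
      finally show ?thesis .
    qed
    then have "ibdry bd ci = (\<lambda>t. k * z t)"
      by (metis (mono_tags, lifting) ext of_int_eq_iff)
    then show "z \<in> TS bd bd' V" unfolding TS_def bounds_dm1_def using z(1) k(1,2) by (metis (mono_tags, lifting) mem_Collect_eq)
  qed
qed

lemma finite_classes:
  assumes V: "spanning_forest bd V"
  shows "finite (cls (bounds_dm1 bd V) ` Lt bd bd')"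
proof -
  let ?B = "bounds_dm1 bd V"
  let ?Z = "{z :: 'e \<Rightarrow> int. \<forall>t. \<bar>z t\<bar> \<le> Mb bd}"
  have "cls ?B ` Lt bd bd' \<subseteq> cls ?B ` ?Z"
  proof
    fix Q assume "Q \<in> cls ?B ` Lt bd bd'"
    then obtain y where y: "y \<in> Lt bd bd'" "Q = cls ?B y" by auto
    then obtain x where x: "rbdry bd x = (\<lambda>t. real_of_int (y t))" unfolding Lt_def by auto
    obtain c where c: "supported_on c V" "rbdry bd c = rbdry bd x" using forest_exists[OF V] by blast
    define fl where "fl = (\<lambda>s. \<lfloor>c s\<rfloor>)"
    define y' where "y' = (\<lambda>t. y t - ibdry bd fl t)"
    have fls: "supported_on fl V" using c(1) unfolding fl_def supported_on_def by simp
    have "(\<lambda>t. y t - y' t) = ibdry bd fl" unfolding y'_def by simp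
    then have "(\<lambda>t. y t - y' t) \<in> ?B" unfolding bounds_dm1_def using fls by blast
    then have "Q = cls ?B y'" using y(2) cls_eq[OF bounds_grp, of bd V y y'] by simp
    moreover have "y' \<in> ?Z"
    proof -
      have "rbdry bd (\<lambda>s. c s - real_of_int \<lfloor>c s\<rfloor>) = (\<lambda>t. real_of_int (y' t))"
        unfolding floor_decomp c(2) x y'_def fl_def by simp
      moreover have "\<bar>rbdry bd (\<lambda>s. c s - real_of_int \<lfloor>c s\<rfloor>) t\<bar> \<le> real_of_int (Mb bd)" for t
        by (rule rbdry_bound) (rule frac_bound)
      ultimately have "\<bar>real_of_int (y' t)\<bar> \<le> real_of_int (Mb bd)" for t by metis
      then show ?thesis by (simp del: of_int_abs add: of_int_abs[symmetric])
    qed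
    ultimately show "Q \<in> cls ?B ` ?Z" by blast
  qed
  moreover have "finite (cls ?B ` ?Z)" using finite_bounded_int_funs by blast
  ultimately show ?thesis by (rule finite_subset)
qed

lemma ibdry_lin3:
  "ibdry bd (\<lambda>s. a * x s + b * y s + c * z s) = (\<lambda>t. a * ibdry bd x t + b * ibdry bd y t + c * ibdry bd z t)"
  unfolding ibdry_def
  by (rule ext) (simp add: sum_distrib_left distrib_right sum.distrib mult.assoc)

lemma ck_nonzero:
  fixes bd :: "'d::finite \<Rightarrow> 'e::finite \<Rightarrow> int"
  assumes V2: "spanning_forest bd (insert e W)" and kW: "k \<notin> W" and eW: "e \<notin> W" and ek: "e \<noteq> k"
    and cs: "supported_on c (insert k W)" and cb: "rbdry bd c = rbdry bd (cell_chain e)"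
  shows "c k \<noteq> 0"
proof
  assume ck: "c k = 0"
  have "supported_on c (insert e W)"
    using cs ck unfolding supported_on_def by auto
  then have "c = cell_chain e"
    using forest_unique[OF V2 _ supported_cell[of e "insert e W"] cb] by simp
  then have "c e = 1" unfolding cell_chain_def by simp
  moreover have "c e = 0" using cs eW ek unfolding supported_on_def by auto
  ultimately show False by simp
qed

lemma order_exists:
  fixes bd :: "'d::finite \<Rightarrow> 'e::finite \<Rightarrow> int"
  assumes V: "spanning_forest bd V" and cs: "supported_on c V" and cb: "rbdry bd c = rbdry bd (cell_chain e)"
  shows "\<exists>n::nat. n > 0 \<and> (\<lambda>t. int n * bd e t) \<in> bounds_dm1 bd V"
proof -
  obtain k ci where k: "k > 0" "supported_on ci V" "(\<lambda>s. real_of_int k * c s) = (\<lambda>s. real_of_int (ci s))"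
    using rational_coeffs[of bd V c "bd e"] V cs cb rbdry_cell unfolding spanning_forest_def by metis
  have "(\<lambda>t. real_of_int (ibdry bd ci t)) = (\<lambda>t. real_of_int (k * bd e t))"
  proof -
    have "(\<lambda>t. real_of_int (ibdry bd ci t)) = rbdry bd (\<lambda>s. real_of_int k * c s)"
      unfolding k(3) rbdry_of_int ..
    also have "\<dots> = (\<lambda>t. real_of_int (k * bd e t))" unfolding rbdry_scale cb rbdry_cell by simp
    finally show ?thesis .
  qed
  then have "ibdry bd ci = (\<lambda>t. k * bd e t)"
    by (metis (mono_tags, lifting) ext of_int_eq_iff)
  then have "(\<lambda>t. int (nat k) * bd e t) \<in> bounds_dm1 bd V"
    unfolding bounds_dm1_def using k by (auto intro!: exI[of _ ci])
  then show ?thesis using k(1) by (intro exI[of _ "nat k"]) auto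
qed

lemma exch_order:
  fixes bd :: "'d::finite \<Rightarrow> 'e::finite \<Rightarrow> int"
  assumes V1: "spanning_forest bd (insert k W)" and kW: "k \<notin> W" and eW: "e \<notin> W" and ek: "e \<noteq> k"
    and cs: "supported_on c (insert k W)" and cb: "rbdry bd c = rbdry bd (cell_chain e)"
    and ck: "c k \<noteq> 0"
    and n: "n > 0" and nB: "(\<lambda>t. int n * bd e t) \<in> bounds_dm1 bd (insert k W)"
  shows "\<exists>m::nat. m > 0 \<and> real m = \<bar>c k\<bar> * real n \<and> (\<lambda>t. int m * bd k t) \<in> bounds_dm1 bd (insert e W)"
proof -
  obtain ci where ci: "(\<lambda>t. int n * bd e t) = ibdry bd ci" "supported_on ci (insert k W)"
    using nB unfolding bounds_dm1_def by auto
  have "rbdry bd (\<lambda>s. real_of_int (ci s)) = rbdry bd (\<lambda>s. real n * c s)"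
  proof -
    have "rbdry bd (\<lambda>s. real_of_int (ci s)) = (\<lambda>t. real_of_int (ibdry bd ci t))" by (rule rbdry_of_int)
    also have "\<dots> = (\<lambda>t. real_of_int (int n * bd e t))" unfolding ci(1)[symmetric] ..
    also have "\<dots> = rbdry bd (\<lambda>s. real n * c s)" unfolding rbdry_scale cb rbdry_cell by simp
    finally show ?thesis .
  qed
  moreover have "supported_on (\<lambda>s. real_of_int (ci s)) (insert k W)" using ci(2) unfolding supported_on_def by simp
  moreover have "supported_on (\<lambda>s. real n * c s) (insert k W)" using cs unfolding supported_on_def by simp
  ultimately have rc: "(\<lambda>s. real_of_int (ci s)) = (\<lambda>s. real n * c s)"
    using forest_unique[OF V1] by blast
  have cik: "real_of_int (ci k) = real n * c k" using fun_cong[OF rc, of k] by simp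
  then have cik0: "ci k \<noteq> 0" using ck n by auto
  define m where "m = nat \<bar>ci k\<bar>"
  have m0: "m > 0" unfolding m_def using cik0 by simp
  have mr: "real m = \<bar>c k\<bar> * real n"
  proof -
    have "real m = \<bar>real_of_int (ci k)\<bar>" unfolding m_def by simp
    also have "\<dots> = \<bar>c k\<bar> * real n" unfolding cik by (simp add: abs_mult)
    finally show ?thesis .
  qed
  define \<sigma> where "\<sigma> = (if ci k > 0 then 1 else (-1::int))"
  have sig: "\<sigma> * ci k = int m" unfolding \<sigma>_def m_def using cik0 by auto
  define \<chi> where "\<chi> = (\<lambda>s. (\<sigma> * int n) * icell e s + (\<sigma> * ci k) * icell k s + (- \<sigma>) * ci s)"
  have "ibdry bd \<chi> = (\<lambda>t. int m * bd k t)"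
  proof
    fix t
    have "ibdry bd ci t = int n * bd e t" using fun_cong[OF ci(1), of t] by simp
    then show "ibdry bd \<chi> t = int m * bd k t"
      unfolding \<chi>_def ibdry_lin3 ibdry_icell sig[symmetric] by (simp add: algebra_simps)
  qed
  moreover have "supported_on \<chi> (insert e W)"
    using ci(2) unfolding \<chi>_def supported_on_def icell_def by auto
  ultimately have "(\<lambda>t. int m * bd k t) \<in> bounds_dm1 bd (insert e W)"
    unfolding bounds_dm1_def by (auto intro!: exI[of _ \<chi>])
  then show ?thesis using m0 mr by blast
qed

lemma exchange_torsion:
  fixes bd :: "'d::finite \<Rightarrow> 'e::finite \<Rightarrow> int"
  assumes cc: "\<And>s u. (\<Sum>t\<in>UNIV. bd s t * bd' t u) = 0"
    and V1: "spanning_forest bd (insert k W)" and V2: "spanning_forest bd (insert e W)"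
    and kW: "k \<notin> W" and eW: "e \<notin> W" and ek: "e \<noteq> k"
    and cs: "supported_on c (insert k W)" and cb: "rbdry bd c = rbdry bd (cell_chain e)"
  shows "real (torsion_order bd bd' (insert e W)) = \<bar>c k\<bar> * real (torsion_order bd bd' (insert k W))"
proof -
  have ck: "c k \<noteq> 0" by (rule ck_nonzero[OF V2 kW eW ek cs cb])
  define c' where "c' = (\<lambda>s. (1 / c k) * (1 * cell_chain e s + (- 1) * c s + c k * cell_chain k s))"
  have c's: "supported_on c' (insert e W)"
    using cs unfolding c'_def supported_on_def cell_chain_def by auto
  have c'b: "rbdry bd c' = rbdry bd (cell_chain k)"
  proof -
    have "rbdry bd (\<lambda>s. 1 * cell_chain e s + (- 1) * c s) = (\<lambda>t. 0)"
      unfolding rbdry_lin cb by simp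
    then have "rbdry bd (\<lambda>s. 1 * (1 * cell_chain e s + (- 1) * c s) + c k * cell_chain k s) = (\<lambda>t. c k * rbdry bd (cell_chain k) t)"
      unfolding rbdry_lin[of bd 1 "\<lambda>s. 1 * cell_chain e s + (- 1) * c s"] by simp
    then have "rbdry bd c' = (\<lambda>t. (1 / c k) * (c k * rbdry bd (cell_chain k) t))"
      unfolding c'_def rbdry_scale by simp
    then show ?thesis using ck by simp
  qed
  have c'e: "c' e = 1 / c k"
  proof -
    have "c e = 0" using cs eW ek unfolding supported_on_def by auto
    then show ?thesis unfolding c'_def cell_chain_def using ek by simp
  qed
  have c'e0: "c' e \<noteq> 0" using c'e ck by simp
  define P1 where "P1 n = (n > 0 \<and> (\<lambda>t. int n * bd e t) \<in> bounds_dm1 bd (insert k W))" for n :: nat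
  define P2 where "P2 n = (n > 0 \<and> (\<lambda>t. int n * bd k t) \<in> bounds_dm1 bd (insert e W))" for n :: nat
  define n1 where "n1 = (LEAST n. P1 n)"
  define n2 where "n2 = (LEAST n. P2 n)"
  have ex1: "\<exists>n. P1 n" unfolding P1_def using order_exists[OF V1 cs cb] .
  have ex2: "\<exists>n. P2 n" unfolding P2_def using order_exists[OF V2 c's c'b] .
  have P1n1: "P1 n1" unfolding n1_def using LeastI_ex[OF ex1] .
  have P2n2: "P2 n2" unfolding n2_def using LeastI_ex[OF ex2] .
  obtain m where m: "m > 0" "real m = \<bar>c k\<bar> * real n1" "(\<lambda>t. int m * bd k t) \<in> bounds_dm1 bd (insert e W)"
    using exch_order[OF V1 kW eW ek cs cb ck] P1n1 unfolding P1_def by blast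
  have "n2 \<le> m" unfolding n2_def by (rule Least_le) (use m in \<open>simp add: P2_def\<close>)
  then have le1: "real n2 \<le> \<bar>c k\<bar> * real n1" using m(2) by linarith
  obtain m' where m': "m' > 0" "real m' = \<bar>c' e\<bar> * real n2" "(\<lambda>t. int m' * bd e t) \<in> bounds_dm1 bd (insert k W)"
    using exch_order[OF V2 eW kW ek[symmetric] c's c'b c'e0] P2n2 unfolding P2_def by blast
  have "n1 \<le> m'" unfolding n1_def by (rule Least_le) (use m' in \<open>simp add: P1_def\<close>)
  then have "real n1 \<le> real n2 / \<bar>c k\<bar>" using m'(2) c'e by (simp add: abs_div)
  then have le2: "\<bar>c k\<bar> * real n1 \<le> real n2" using ck by (simp add: field_simps)
  have n21: "real n2 = \<bar>c k\<bar> * real n1" using le1 le2 by linarith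
  have B1: "grp (bounds_dm1 bd (insert k W))" and B2: "grp (bounds_dm1 bd (insert e W))"
    by (rule bounds_grp)+
  have Ns_eq: "insert k (insert e W) = insert e (insert k W)" by auto
  have cnt1: "card (cls (bounds_dm1 bd (insert k W)) ` Lt bd bd') = n1 * card (cls (bounds_dm1 bd (insert e (insert k W))) ` Lt bd bd')"
  proof (rule count_classes[OF B1])
    show "n1 > 0" using P1n1 unfolding P1_def by simp
    show "(\<lambda>t. int n1 * bd e t) \<in> bounds_dm1 bd (insert k W)" using P1n1 unfolding P1_def by simp
    show "(\<lambda>t. int m * bd e t) \<notin> bounds_dm1 bd (insert k W)" if "0 < m" "m < n1" for m
      using not_less_Least[of m P1] that unfolding n1_def P1_def by blast
    show "(\<lambda>t. y t + m * bd e t) \<in> Lt bd bd'" if "y \<in> Lt bd bd'" for y m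
      by (rule Lt_closed[OF cc that])
    show "finite (cls (bounds_dm1 bd (insert k W)) ` Lt bd bd')" by (rule finite_classes[OF V1])
    show "bounds_dm1 bd (insert e (insert k W)) = {(\<lambda>t. b t + m * bd e t) | b m. b \<in> bounds_dm1 bd (insert k W)}"
      by (rule bounds_insert[symmetric]) (use eW ek in auto)
  qed
  have cnt2: "card (cls (bounds_dm1 bd (insert e W)) ` Lt bd bd') = n2 * card (cls (bounds_dm1 bd (insert e (insert k W))) ` Lt bd bd')"
  proof (rule count_classes[OF B2])
    show "n2 > 0" using P2n2 unfolding P2_def by simp
    show "(\<lambda>t. int n2 * bd k t) \<in> bounds_dm1 bd (insert e W)" using P2n2 unfolding P2_def by simp
    show "(\<lambda>t. int m * bd k t) \<notin> bounds_dm1 bd (insert e W)" if "0 < m" "m < n2" for m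
      using not_less_Least[of m P2] that unfolding n2_def P2_def by blast
    show "(\<lambda>t. y t + m * bd k t) \<in> Lt bd bd'" if "y \<in> Lt bd bd'" for y m
      by (rule Lt_closed[OF cc that])
    show "finite (cls (bounds_dm1 bd (insert e W)) ` Lt bd bd')" by (rule finite_classes[OF V2])
    show "bounds_dm1 bd (insert e (insert k W)) = {(\<lambda>t. b t + m * bd k t) | b m. b \<in> bounds_dm1 bd (insert e W)}"
      unfolding Ns_eq[symmetric] by (rule bounds_insert[symmetric]) (use kW ek in auto)
  qed
  have t1: "torsion_order bd bd' (insert k W) = card (cls (bounds_dm1 bd (insert k W)) ` Lt bd bd')"
    unfolding torsion_order_cls TS_eq_Lt[OF V1] ..
  have t2: "torsion_order bd bd' (insert e W) = card (cls (bounds_dm1 bd (insert e W)) ` Lt bd bd')"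
    unfolding torsion_order_cls TS_eq_Lt[OF V2] ..
  show ?thesis unfolding t1 t2 cnt1 cnt2 of_nat_mult n21 by simp
qed

context sfw begin

lemma det_col_zero_others:
  assumes p0: "p0 < r" and q: "q < r" "q \<noteq> p0"
  shows "det (mat r r (\<lambda>(i,j). if j = p0 then D (g q) (w i) else D (g j) (w i))) = 0"
proof (rule det_identical_columns[of _ r q p0])
  show "col (mat r r (\<lambda>(i,j). if j = p0 then D (g q) (w i) else D (g j) (w i))) q =
        col (mat r r (\<lambda>(i,j). if j = p0 then D (g q) (w i) else D (g j) (w i))) p0"
    using p0 q by (auto intro!: eq_vecI)
qed (use p0 q in auto)

lemma torsion_det:
  fixes bd' :: "'e \<Rightarrow> 'f::finite \<Rightarrow> int"
  assumes cc: "\<And>s u. (\<Sum>t\<in>UNIV. bd s t * bd' t u) = 0"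
  shows "spanning_forest bd V \<Longrightarrow> bij_betw f {0..<r} V \<Longrightarrow>
    real (torsion_order bd bd' V) = \<bar>det (T f)\<bar> * real (torsion_order bd bd' V0)"
proof (induction "card (V - V0)" arbitrary: V f)
  case 0
  then have "V - V0 = {}" by simp
  then have "V \<subseteq> V0" by blast
  moreover have "card V = card V0" using forest_card[OF "0.prems"(1)] r_card by simp
  ultimately have VV0: "V = V0" using card_subset_eq[of V0 V] by simp
  have "\<bar>det (T f)\<bar> = \<bar>det (T w)\<bar>" using T_perm[OF wbij] "0.prems"(2) VV0 by simp
  then show ?case using T_w VV0 by simp
next
  case (Suc n)
  note V = Suc.prems(1) and fb = Suc.prems(2)
  have finj: "inj_on f {0..<r}" and fimg: "f ` {0..<r} = V" using fb unfolding bij_betw_def by auto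
  obtain e where e: "e \<in> V" "e \<notin> V0"
    using Suc.hyps(2) by (metis Diff_iff card.empty all_not_in_conv nat.distinct(1))
  obtain p0 where p0: "p0 < r" "f p0 = e" using e fimg by auto
  have dT: "det (T f) \<noteq> 0" by (rule forest_det_nonzero[OF V fb])
  have Drep: "D e (w i) = (\<Sum>x\<in>{0..<r}. D e (w x) * D (w x) (w i))" for i
  proof -
    have "D e (w i) = (\<Sum>x=0..<r. D e (w x) * cell_chain (w x) (w i))"
      using fun_cong[OF chain_repr[OF wbij D_supp[of e]], of "w i"] by simp
    also have "\<dots> = (\<Sum>x\<in>{0..<r}. D e (w x) * D (w x) (w i))"
      using Dchain_V0[OF forest w_in] by simp
    finally show ?thesis .
  qed
  have "T f = mat r r (\<lambda>(i,j). if j = p0 then (\<Sum>x\<in>{0..<r}. D e (w x) * D (w x) (w i)) else D (f j) (w i))"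
    unfolding T_def by (rule mat_eq_on) (auto simp: Drep[symmetric] p0)
  then have "det (T f) = (\<Sum>x\<in>{0..<r}. D e (w x) * det (mat r r (\<lambda>(i,j). if j = p0 then D (w x) (w i) else D (f j) (w i))))"
    using det_col_linear[OF p0(1), of "{0..<r}" "\<lambda>x. D e (w x)" "\<lambda>x i. D (w x) (w i)" "\<lambda>i j. D (f j) (w i)"]
    by simp
  also have "\<dots> = (\<Sum>x\<in>{0..<r}. D e (w x) * det (T (f(p0 := w x))))"
  proof (rule sum.cong[OF refl])
    fix x
    have "mat r r (\<lambda>(i,j). if j = p0 then D (w x) (w i) else D (f j) (w i)) = T (f(p0 := w x))"
      unfolding T_def by (rule mat_eq_on) auto
    then show "D e (w x) * det (mat r r (\<lambda>(i,j). if j = p0 then D (w x) (w i) else D (f j) (w i))) =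
        D e (w x) * det (T (f(p0 := w x)))" by simp
  qed
  finally obtain x where x: "x < r" "det (T (f(p0 := w x))) \<noteq> 0"
    using dT by (metis (no_types, lifting) atLeastLessThan_iff mult_zero_right sum.neutral)
  define k where "k = w x"
  define f' where "f' = f(p0 := k)"
  have kV0: "k \<in> V0" unfolding k_def using w_in[OF x(1)] .
  have dT': "det (T f') \<noteq> 0" using x(2) unfolding f'_def k_def .
  have f'inj: "inj_on f' {0..<r}"
  proof (rule ccontr)
    assume "\<not> inj_on f' {0..<r}"
    then have "det (mat r r (\<lambda>(i,p). (\<lambda>i s. D s (w i)) i (f' p))) = 0"
      by (rule det_cols_noninj)
    then show False using dT' unfolding T_def by simp
  qed
  define W where "W = f ` ({0..<r} - {p0})"
  have VW: "V = insert e W" unfolding W_def using fimg p0 by auto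
  have eW: "e \<notin> W" unfolding W_def using finj p0 by (auto simp: inj_on_def)
  have kW: "k \<notin> W"
  proof
    assume "k \<in> W"
    then obtain j where j0: "j \<in> {0..<r} - {p0}" "f j = k" unfolding W_def by blast
    then have j: "j < r" "j \<noteq> p0" "f j = k" by auto
    then have "f' j = f' p0" unfolding f'_def by simp
    then show False using f'inj j p0 unfolding inj_on_def by (metis atLeastLessThan_iff zero_le)
  qed
  have ek: "e \<noteq> k" using e kV0 by auto
  have f'img: "f' ` {0..<r} = insert k W"
  proof -
    have "f' ` {0..<r} = f' ` (insert p0 ({0..<r} - {p0}))" using p0 by (simp add: insert_absorb)
    also have "\<dots> = insert k (f ` ({0..<r} - {p0}))" unfolding f'_def by auto
    finally show ?thesis unfolding W_def .
  qed
  have f'b: "bij_betw f' {0..<r} (insert k W)" using f'inj f'img unfolding bij_betw_def by simp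
  have V': "spanning_forest bd (insert k W)" by (rule det_nonzero_forest[OF dT' f'b])
  have card': "n = card (insert k W - V0)"
  proof -
    have "insert k W - V0 = (V - V0) - {e}" using kV0 VW eW e(2) by auto
    then show ?thesis using Suc.hyps(2) e by simp
  qed
  have IH: "real (torsion_order bd bd' (insert k W)) = \<bar>det (T f')\<bar> * real (torsion_order bd bd' V0)"
    by (rule Suc.hyps(1)[OF card' V' f'b])
  obtain c where c: "supported_on c (insert k W)" "rbdry bd c = rbdry bd (cell_chain e)"
    using forest_exists[OF V'] by blast
  have V2: "spanning_forest bd (insert e W)" using V VW by simp
  have tV: "real (torsion_order bd bd' (insert e W)) = \<bar>c k\<bar> * real (torsion_order bd bd' (insert k W))"
    by (rule exchange_torsion[OF cc V' V2 kW eW ek c])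
  have De: "D e = E (\<lambda>p. c (f' p)) f'"
  proof (rule forest_unique[OF forest D_supp E_supp])
    have "rbdry bd (E (\<lambda>p. c (f' p)) f') = rbdry bd (C (\<lambda>p. c (f' p)) f')" by (rule E_bd)
    also have "C (\<lambda>p. c (f' p)) f' = c" by (rule C_repr[OF f'b c(1)])
    finally show "rbdry bd (D e) = rbdry bd (E (\<lambda>p. c (f' p)) f')" using D_bd c(2) by simp
  qed
  have ff': "j \<noteq> p0 \<Longrightarrow> f j = f' j" for j unfolding f'_def by simp
  have "T f = mat r r (\<lambda>(i,j). if j = p0 then (\<Sum>q\<in>{0..<r}. c (f' q) * D (f' q) (w i)) else D (f' j) (w i))"
    unfolding T_def
  proof (rule mat_eq_on)
    fix i j assume ij: "i < r" "j < r"
    show "(\<lambda>(i,p). D (f p) (w i)) (i, j) =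
      (\<lambda>(i,j). if j = p0 then (\<Sum>q\<in>{0..<r}. c (f' q) * D (f' q) (w i)) else D (f' j) (w i)) (i, j)"
      using fun_cong[OF De, of "w i"] p0 ff'[of j] unfolding E_def by auto
  qed
  then have "det (T f) = (\<Sum>q\<in>{0..<r}. c (f' q) * det (mat r r (\<lambda>(i,j). if j = p0 then D (f' q) (w i) else D (f' j) (w i))))"
    using det_col_linear[OF p0(1), of "{0..<r}" "\<lambda>q. c (f' q)" "\<lambda>q i. D (f' q) (w i)" "\<lambda>i j. D (f' j) (w i)"]
    by simp
  also have "\<dots> = (\<Sum>q\<in>{0..<r}. if q = p0 then c (f' p0) * det (T f') else 0)"
  proof (rule sum.cong[OF refl])
    fix q assume q: "q \<in> {0..<r}"
    show "c (f' q) * det (mat r r (\<lambda>(i,j). if j = p0 then D (f' q) (w i) else D (f' j) (w i))) =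
      (if q = p0 then c (f' p0) * det (T f') else 0)"
    proof (cases "q = p0")
      case True
      have "mat r r (\<lambda>(i,j). if j = p0 then D (f' q) (w i) else D (f' j) (w i)) = T f'"
        unfolding T_def True by (rule mat_eq_on) auto
      then show ?thesis using True by simp
    next
      case False
      then show ?thesis using det_col_zero_others[OF p0(1), of q f'] q by simp
    qed
  qed
  also have "\<dots> = c k * det (T f')" using p0 unfolding f'_def by simp
  finally have "det (T f) = c k * det (T f')" .
  then show ?case using tV IH VW by (simp add: abs_mult)
qed

end

lemma det_char_expand:
  fixes M :: "real mat"
  assumes M: "M \<in> carrier_mat n n"
  shows "det (U \<cdot>\<^sub>m 1\<^sub>m n - M) = (\<Sum>p\<in>{p. p permutes {0..<n}}. signof p *
      (\<Prod>i=0..<n. U * (if i = p i then 1 else 0) - M $$ (i, p i)))"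
proof -
  have "det (U \<cdot>\<^sub>m 1\<^sub>m n - M) = (\<Sum>p\<in>{p. p permutes {0..<n}}. signof p *
      (\<Prod>i=0..<n. (U \<cdot>\<^sub>m 1\<^sub>m n - M) $$ (i, p i)))"
    by (rule det_def') (use M in auto)
  also have "\<dots> = (\<Sum>p\<in>{p. p permutes {0..<n}}. signof p *
      (\<Prod>i=0..<n. U * (if i = p i then 1 else 0) - M $$ (i, p i)))"
  proof (rule sum.cong[OF refl])
    fix p assume "p \<in> {p. p permutes {0..<n}}"
    then have pn: "\<And>i. i < n \<Longrightarrow> p i < n" using permutes_in_image by fastforce
    show "signof p * (\<Prod>i=0..<n. (U \<cdot>\<^sub>m 1\<^sub>m n - M) $$ (i, p i)) =
      signof p * (\<Prod>i=0..<n. U * (if i = p i then 1 else 0) - M $$ (i, p i))"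
      using M by (auto intro!: prod.cong simp: pn)
  qed
  finally show ?thesis .
qed

lemma det_char_cont:
  fixes M :: "real mat"
  assumes M: "M \<in> carrier_mat n n"
  shows "((\<lambda>U. det (U \<cdot>\<^sub>m 1\<^sub>m n - M)) \<longlongrightarrow> det (0 \<cdot>\<^sub>m 1\<^sub>m n - M)) (at 0)"
proof -
  have "isCont (\<lambda>U. (\<Sum>p\<in>{p. p permutes {0..<n}}. signof p *
      (\<Prod>i=0..<n. U * (if i = p i then 1 else 0) - M $$ (i, p i)))) 0"
    by (intro continuous_intros)
  then show ?thesis unfolding isCont_def det_char_expand[OF M] .
qed

lemma eq_at_zero:
  fixes F G :: "real \<Rightarrow> real"
  assumes "(F \<longlongrightarrow> F 0) (at 0)" "(G \<longlongrightarrow> G 0) (at 0)" "\<And>U. U \<noteq> 0 \<Longrightarrow> F U = G U"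
  shows "F 0 = G 0"
proof -
  have "\<forall>\<^sub>F U in at 0. G U = F U" using assms(3) by (auto simp: eventually_at_filter)
  then have "(F \<longlongrightarrow> G 0) (at 0)" using Lim_transform_eventually[OF assms(2)] by simp
  then show ?thesis using tendsto_unique[OF at_neq_bot assms(1)] by simp
qed

lemma key_identity:
  fixes bd :: "'d::finite \<Rightarrow> 'e::finite \<Rightarrow> int" and en :: "nat \<Rightarrow> 'd"
  assumes S: "sfw bd V0 r w"
    and N_def: "N = card (UNIV - V0)"
    and enum: "bij_betw en {..<N} (UNIV - V0)"
    and U: "U \<noteq> 0"
  defines "A \<equiv> mat r N (\<lambda>(i,a). Dchain bd V0 (en a) (w i))"
  shows "det (U \<cdot>\<^sub>m 1\<^sub>m N - transpose_mat A * A) =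
     (\<Sum>V\<in>{V. card V = r}. (-1) ^ card (V \<inter> (UNIV - V0)) * (det (sfw.T bd V0 r w (enum_set r V)))^2
        * U ^ (N - card (V \<inter> (UNIV - V0))))"
proof -
  interpret S: sfw bd V0 r w by (rule S)
  have Ac: "A \<in> carrier_mat r N" unfolding A_def by simp
  define g where "g c = (if c < r then w c else en (c - r))" for c
  have en_out: "en a \<notin> V0" if "a < N" for a using enum that unfolding bij_betw_def by auto
  have en_inj: "inj_on en {..<N}" using enum unfolding bij_betw_def by auto
  have winj: "inj_on w {0..<r}" using S.wbij unfolding bij_betw_def by auto
  have ginj: "inj_on g {0..<r+N}"
  proof (rule inj_onI)
    fix x y assume xy: "x \<in> {0..<r+N}" "y \<in> {0..<r+N}" "g x = g y"
    show "x = y"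
    proof (cases "x < r"; cases "y < r")
      assume "x < r" "y < r" then show ?thesis using xy winj unfolding g_def inj_on_def by auto
    next
      assume "x < r" "\<not> y < r"
      then have "g x \<in> V0" "g y \<notin> V0" using S.w_in en_out[of "y - r"] xy(2) unfolding g_def by auto
      then show ?thesis using xy by simp
    next
      assume "\<not> x < r" "y < r"
      then have "g y \<in> V0" "g x \<notin> V0" using S.w_in en_out[of "x - r"] xy(1) unfolding g_def by auto
      then show ?thesis using xy by simp
    next
      assume "\<not> x < r" "\<not> y < r"
      then have "en (x - r) = en (y - r)" using xy unfolding g_def by simp
      then have "x - r = y - r" using en_inj xy \<open>\<not> x < r\<close> \<open>\<not> y < r\<close> unfolding inj_on_def by auto
      then show ?thesis using \<open>\<not> x < r\<close> \<open>\<not> y < r\<close> by simp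
    qed
  qed
  have gimg: "g ` {0..<r+N} = UNIV"
  proof -
    have "V0 \<subseteq> g ` {0..<r+N}"
    proof
      fix s assume "s \<in> V0"
      then obtain i where "i < r" "s = w i" using S.V0_w by blast
      then show "s \<in> g ` {0..<r+N}" unfolding g_def by (auto intro!: image_eqI[of _ _ i])
    qed
    moreover have "UNIV - V0 \<subseteq> g ` {0..<r+N}"
    proof
      fix s assume "s \<in> UNIV - V0"
      then obtain a where "a < N" "s = en a" using enum unfolding bij_betw_def by auto
      then show "s \<in> g ` {0..<r+N}" unfolding g_def by (auto intro!: image_eqI[of _ _ "a + r"])
    qed
    ultimately show ?thesis by blast
  qed
  have g_low: "c < r \<Longrightarrow> g c \<in> V0" for c unfolding g_def using S.w_in by simp
  have g_high: "r \<le> c \<Longrightarrow> c < r + N \<Longrightarrow> g c \<notin> V0" for c unfolding g_def using en_out[of "c - r"] by simp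
  define P where "P i c = Dchain bd V0 (g c) (w i)" for i c
  define \<delta> where "\<delta> c = (if c < r then U else -1)" for c
  have Plow: "P i c = (if i = c then 1 else 0)" if "i < r" "c < r" for i c
  proof -
    have "P i c = cell_chain (w c) (w i)" unfolding P_def g_def
      using that Dchain_V0[OF S.forest S.w_in[of c]] by simp
    then show ?thesis using that winj unfolding cell_chain_def inj_on_def by auto
  qed
  have lhs: "mat r r (\<lambda>(i,k). \<Sum>c\<in>{0..<r+N}. P i c * \<delta> c * P k c) = U \<cdot>\<^sub>m 1\<^sub>m r - A * transpose_mat A"
  proof (rule eq_matI)
    fix i k assume ik: "i < dim_row (U \<cdot>\<^sub>m 1\<^sub>m r - A * transpose_mat A)" "k < dim_col (U \<cdot>\<^sub>m 1\<^sub>m r - A * transpose_mat A)"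
    then have i: "i < r" and k: "k < r" using Ac by auto
    have s1: "(\<Sum>c\<in>{0..<r}. P i c * \<delta> c * P k c) = (if i = k then U else 0)"
    proof -
      have "(\<Sum>c\<in>{0..<r}. P i c * \<delta> c * P k c) = (\<Sum>c\<in>{0..<r}. if c = i then (if i = k then U else 0) else 0)"
        by (rule sum.cong[OF refl]) (use i k in \<open>auto simp: Plow \<delta>_def\<close>)
      then show ?thesis using i by simp
    qed
    have s2: "(\<Sum>c\<in>{r..<r+N}. P i c * \<delta> c * P k c) = - (\<Sum>a\<in>{0..<N}. A $$ (i,a) * A $$ (k,a))"
    proof -
      have "(\<Sum>c\<in>{r..<r+N}. P i c * \<delta> c * P k c) = (\<Sum>a\<in>{0..<N}. P i (a + r) * \<delta> (a + r) * P k (a + r))"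
        using sum.shift_bounds_nat_ivl[of "\<lambda>c. P i c * \<delta> c * P k c" 0 r N] by (simp add: add.commute)
      also have "\<dots> = (\<Sum>a\<in>{0..<N}. - (A $$ (i,a) * A $$ (k,a)))"
        by (rule sum.cong[OF refl]) (use i k in \<open>auto simp: P_def \<delta>_def g_def A_def\<close>)
      finally show ?thesis by (simp add: sum_negf)
    qed
    have "(\<Sum>c\<in>{0..<r+N}. P i c * \<delta> c * P k c) = (\<Sum>c\<in>{0..<r}. P i c * \<delta> c * P k c) + (\<Sum>c\<in>{r..<r+N}. P i c * \<delta> c * P k c)"
      by (rule sum.atLeastLessThan_concat[symmetric]) auto
    also have "\<dots> = (if i = k then U else 0) - (\<Sum>a\<in>{0..<N}. A $$ (i,a) * A $$ (k,a))" using s1 s2 by simp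
    also have "\<dots> = (U \<cdot>\<^sub>m 1\<^sub>m r - A * transpose_mat A) $$ (i, k)"
      using i k Ac by (simp add: scalar_prod_def)
    finally show "mat r r (\<lambda>(i,k). \<Sum>c\<in>{0..<r+N}. P i c * \<delta> c * P k c) $$ (i, k) = (U \<cdot>\<^sub>m 1\<^sub>m r - A * transpose_mat A) $$ (i, k)"
      using i k by simp
  qed (use Ac in auto)
  define jj where "jj V = card (V \<inter> (UNIV - V0))" for V :: "'d set"
  define sq where "sq V = (det (S.T (enum_set r V)))^2" for V :: "'d set"
  define Sets where "Sets = {V. V \<subseteq> {0..<r+N} \<and> card V = r}"
  have term_eq: "(det (mat r r (\<lambda>(i,p). P i (enum_set r V p))))^2 * (\<Prod>c\<in>V. \<delta> c) =
      sq (g ` V) * (U ^ (r - jj (g ` V)) * (-1) ^ jj (g ` V))" if V: "V \<in> Sets" for V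
  proof -
    have Vs: "V \<subseteq> {0..<r+N}" "card V = r" using V unfolding Sets_def by auto
    have finV: "finite V" using Vs finite_subset by blast
    have gVinj: "inj_on g V" using ginj Vs inj_on_subset by blast
    have cgV: "card (g ` V) = r" using card_image[OF gVinj] Vs by simp
    have eb: "bij_betw (enum_set r V) {0..<r} V" by (rule enum_set_bij[OF finV Vs(2)])
    have b1: "bij_betw (g \<circ> enum_set r V) {0..<r} (g ` V)"
      by (rule bij_betw_trans[OF eb]) (simp add: bij_betw_def gVinj)
    have b2: "bij_betw (enum_set r (g ` V)) {0..<r} (g ` V)" by (rule enum_set_bij) (use cgV in auto)
    have "mat r r (\<lambda>(i,p). P i (enum_set r V p)) = S.T (g \<circ> enum_set r V)"
      unfolding S.T_def P_def by simp
    then have d: "(det (mat r r (\<lambda>(i,p). P i (enum_set r V p))))^2 = sq (g ` V)"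
      unfolding sq_def using S.T_perm[OF b2 b1] by (metis power2_abs)
    have jjV: "jj (g ` V) = card (V - {0..<r})"
    proof -
      have "g ` V \<inter> (UNIV - V0) = g ` (V - {0..<r})"
        using g_low g_high Vs(1) by (auto simp: image_iff)
      then show ?thesis unfolding jj_def using card_image[OF inj_on_subset[OF gVinj]] by auto
    qed
    have cI: "card (V \<inter> {0..<r}) = r - jj (g ` V)" using card_Int_Diff[OF finV, of "{0..<r}"] Vs(2) jjV by simp
    have "(\<Prod>c\<in>V. \<delta> c) = (\<Prod>c\<in>V \<inter> {0..<r}. \<delta> c) * (\<Prod>c\<in>V - {0..<r}. \<delta> c)"
      by (rule prod.Int_Diff[OF finV])
    also have "(\<Prod>c\<in>V \<inter> {0..<r}. \<delta> c) = U ^ (r - jj (g ` V))"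
      using cI by (simp add: \<delta>_def)
    also have "(\<Prod>c\<in>V - {0..<r}. \<delta> c) = (-1) ^ jj (g ` V)"
      using jjV by (simp add: \<delta>_def)
    finally show ?thesis using d by simp
  qed
  have reidx: "(\<Sum>V\<in>Sets. sq (g ` V) * (U ^ (r - jj (g ` V)) * (-1) ^ jj (g ` V))) =
      (\<Sum>V\<in>{V. card V = r}. sq V * (U ^ (r - jj V) * (-1) ^ jj V))"
  proof -
    have inj: "inj_on (image g) Sets"
      by (rule inj_on_subset[OF inj_on_image_Pow[OF ginj]]) (auto simp: Sets_def)
    have img: "image g ` Sets = {V. card V = r}"
    proof
      show "image g ` Sets \<subseteq> {V. card V = r}"
      proof
        fix V' assume "V' \<in> image g ` Sets"
        then obtain V where V: "V \<in> Sets" "V' = g ` V" by blast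
        then have Vs: "V \<subseteq> {0..<r+N}" "card V = r" unfolding Sets_def by auto
        have "card (g ` V) = card V" by (rule card_image[OF inj_on_subset[OF ginj Vs(1)]])
        then show "V' \<in> {V. card V = r}" using V(2) Vs(2) by simp
      qed
      show "{V. card V = r} \<subseteq> image g ` Sets"
      proof
        fix V' :: "'d set" assume V': "V' \<in> {V. card V = r}"
        define V where "V = {c\<in>{0..<r+N}. g c \<in> V'}"
        have Vsub: "V \<subseteq> {0..<r+N}" unfolding V_def by blast
        have gV: "g ` V = V'"
        proof
          show "g ` V \<subseteq> V'" unfolding V_def by blast
          show "V' \<subseteq> g ` V"
          proof
            fix s assume s: "s \<in> V'"
            have "s \<in> g ` {0..<r+N}" using gimg by simp
            then obtain c where c: "c \<in> {0..<r+N}" "s = g c" by blast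
            then have "c \<in> V" unfolding V_def using s by simp
            then show "s \<in> g ` V" using c(2) by blast
          qed
        qed
        have "card (g ` V) = card V" by (rule card_image[OF inj_on_subset[OF ginj Vsub]])
        then have "card V = r" using V' gV by simp
        then have "V \<in> Sets" unfolding Sets_def using Vsub by simp
        then show "V' \<in> image g ` Sets" using gV by blast
      qed
    qed
    have "(\<Sum>V\<in>{V. card V = r}. sq V * (U ^ (r - jj V) * (-1) ^ jj V)) =
        (\<Sum>V\<in>image g ` Sets. sq V * (U ^ (r - jj V) * (-1) ^ jj V))" unfolding img ..
    also have "\<dots> = (\<Sum>V\<in>Sets. sq (g ` V) * (U ^ (r - jj (g ` V)) * (-1) ^ jj (g ` V)))"
      by (rule sum.reindex[OF inj, unfolded o_def])
    finally show ?thesis by simp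
  qed
  have CB: "det (U \<cdot>\<^sub>m 1\<^sub>m r - A * transpose_mat A) = (\<Sum>V\<in>{V. card V = r}. sq V * (U ^ (r - jj V) * (-1) ^ jj V))"
  proof -
    have "det (U \<cdot>\<^sub>m 1\<^sub>m r - A * transpose_mat A) =
      (\<Sum>V\<in>Sets. (det (mat r r (\<lambda>(i,p). P i (enum_set r V p))))^2 * (\<Prod>c\<in>V. \<delta> c))"
      unfolding lhs[symmetric] Sets_def by (rule cauchy_binet_w)
    also have "\<dots> = (\<Sum>V\<in>Sets. sq (g ` V) * (U ^ (r - jj (g ` V)) * (-1) ^ jj (g ` V)))"
      by (rule sum.cong[OF refl]) (rule term_eq)
    finally show ?thesis using reidx by simp
  qed
  have syl: "U ^ N * det (U \<cdot>\<^sub>m 1\<^sub>m r - A * transpose_mat A) = U ^ r * det (U \<cdot>\<^sub>m 1\<^sub>m N - transpose_mat A * A)"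
    by (rule sylvester_det[OF Ac])
  have jjle: "jj V \<le> r" "jj V \<le> N" if "card V = r" for V :: "'d set"
  proof -
    show "jj V \<le> r" unfolding jj_def using that card_mono[of V "V \<inter> (UNIV - V0)"] by auto
    show "jj V \<le> N" unfolding jj_def N_def by (rule card_mono) auto
  qed
  have "U ^ r * det (U \<cdot>\<^sub>m 1\<^sub>m N - transpose_mat A * A) =
      U ^ r * (\<Sum>V\<in>{V. card V = r}. (-1) ^ jj V * sq V * U ^ (N - jj V))"
  proof -
    have "U ^ r * det (U \<cdot>\<^sub>m 1\<^sub>m N - transpose_mat A * A) = (\<Sum>V\<in>{V. card V = r}. U ^ N * (sq V * (U ^ (r - jj V) * (-1) ^ jj V)))"
      using syl CB by (simp add: sum_distrib_left)
    also have "\<dots> = (\<Sum>V\<in>{V. card V = r}. U ^ r * ((-1) ^ jj V * sq V * U ^ (N - jj V)))"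
    proof (rule sum.cong[OF refl])
      fix V :: "'d set" assume "V \<in> {V. card V = r}"
      then have le: "jj V \<le> r" "jj V \<le> N" using jjle by auto
      have eq: "U ^ N * U ^ (r - jj V) = U ^ r * U ^ (N - jj V)"
        using le by (simp add: power_add[symmetric] add.commute)
      have "U ^ N * (sq V * (U ^ (r - jj V) * (-1) ^ jj V)) = (U ^ N * U ^ (r - jj V)) * (sq V * (-1) ^ jj V)"
        by (simp only: mult_ac)
      also have "\<dots> = (U ^ r * U ^ (N - jj V)) * (sq V * (-1) ^ jj V)" unfolding eq ..
      also have "\<dots> = U ^ r * ((-1) ^ jj V * sq V * U ^ (N - jj V))" by (simp only: mult_ac)
      finally show "U ^ N * (sq V * (U ^ (r - jj V) * (-1) ^ jj V)) = U ^ r * ((-1) ^ jj V * sq V * U ^ (N - jj V))" .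
    qed
    finally show ?thesis by (simp add: sum_distrib_left)
  qed
  then show ?thesis using U unfolding jj_def sq_def by simp
qed

lemma sum_cell_left: "(\<Sum>s\<in>(UNIV::'d::finite set). cell_chain x s * f s) = f x"
proof -
  have "(\<Sum>s\<in>(UNIV::'d set). cell_chain x s * f s) = (\<Sum>s\<in>UNIV. if s = x then f x else 0)"
    by (rule sum.cong) (auto simp: cell_chain_def)
  then show ?thesis by simp
qed

lemma sum_cell_right: "(\<Sum>s\<in>(UNIV::'d::finite set). f s * cell_chain x s) = f x"
  using sum_cell_left[of x f] by (simp add: mult.commute)

theorem theorem8p2:
  fixes bd :: "'d::finite \<Rightarrow> 'e::finite \<Rightarrow> int"
    and bd' :: "'e \<Rightarrow> 'f::finite \<Rightarrow> int"
    and V0 :: "'d set"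
    and N :: nat
    and en :: "nat \<Rightarrow> 'd"
  assumes chain_complex: "\<And>s u. (\<Sum>t\<in>UNIV. bd s t * bd' t u) = 0"
    and forest: "spanning_forest bd V0"
    and N_def: "N = card (UNIV - V0)"
    and enum: "bij_betw en {..<N} (UNIV - V0)"
  shows "\<forall>U::real.
     det ((U + 1) \<cdot>\<^sub>m 1\<^sub>m N - Mesh_geom bd V0 N en)
       = det (U \<cdot>\<^sub>m 1\<^sub>m N - Mesh_sharp_geom bd V0 N en)
   \<and> det (U \<cdot>\<^sub>m 1\<^sub>m N - Mesh_sharp_geom bd V0 N en)
       = U ^ N + (\<Sum>j=1..N. (-1) ^ j *
           (\<Sum>V\<in>{V. spanning_forest bd V \<and> card (V \<inter> (UNIV - V0)) = j}.
              (real (torsion_order bd bd' V) / real (torsion_order bd bd' V0))\<^sup>2)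
           * U ^ (N - j))"
proof -
  define r where "r = card V0"
  obtain w where wb: "bij_betw w {0..<r} V0"
    using finite_same_card_bij[of "{0..<r}" V0] unfolding r_def by auto
  have S: "sfw bd V0 r w" using forest wb by unfold_locales
  interpret S: sfw bd V0 r w by (rule S)
  define A where "A = mat r N (\<lambda>(i,a). Dchain bd V0 (en a) (w i))"
  have Ac: "A \<in> carrier_mat r N" unfolding A_def by simp
  have en_out: "en a \<notin> V0" if "a < N" for a using enum that unfolding bij_betw_def by auto
  have en_inj: "inj_on en {..<N}" using enum unfolding bij_betw_def by auto
  have cin: "cinner (Dchain bd V0 x) (Dchain bd V0 y) = (\<Sum>i=0..<r. Dchain bd V0 x (w i) * Dchain bd V0 y (w i))" for x y
  proof -
    have "cinner (Dchain bd V0 x) (Dchain bd V0 y) = (\<Sum>s\<in>V0. Dchain bd V0 x s * Dchain bd V0 y s)"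
      unfolding cinner_def
      by (rule sum.mono_neutral_right) (auto simp: supported_onD[OF S.D_supp])
    also have "\<dots> = (\<Sum>i=0..<r. Dchain bd V0 x (w i) * Dchain bd V0 y (w i))"
      using sum.reindex_bij_betw[OF wb, of "\<lambda>s. Dchain bd V0 x s * Dchain bd V0 y s"] by simp
    finally show ?thesis .
  qed
  have sharp: "Mesh_sharp_geom bd V0 N en = transpose_mat A * A"
  proof (rule eq_matI)
    fix a b assume ab: "a < dim_row (transpose_mat A * A)" "b < dim_col (transpose_mat A * A)"
    then have a: "a < N" and b: "b < N" using Ac by auto
    show "Mesh_sharp_geom bd V0 N en $$ (a, b) = (transpose_mat A * A) $$ (a, b)"
      unfolding Mesh_sharp_geom_def using a b Ac by (simp add: cin scalar_prod_def A_def)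
  qed (use Ac in \<open>auto simp: Mesh_sharp_geom_def\<close>)
  have zz: "cinner (zcycle bd V0 x) (zcycle bd V0 y) = (if x = y then 1 else 0) + cinner (Dchain bd V0 x) (Dchain bd V0 y)"
    if x: "x \<notin> V0" and y: "y \<notin> V0" for x y
  proof -
    have Dx: "Dchain bd V0 y x = 0" using supported_onD[OF S.D_supp x] .
    have Dy: "Dchain bd V0 x y = 0" using supported_onD[OF S.D_supp y] .
    have "cinner (zcycle bd V0 x) (zcycle bd V0 y) =
      (\<Sum>s\<in>UNIV. cell_chain x s * cell_chain y s) - (\<Sum>s\<in>UNIV. cell_chain x s * Dchain bd V0 y s)
      - (\<Sum>s\<in>UNIV. Dchain bd V0 x s * cell_chain y s) + (\<Sum>s\<in>UNIV. Dchain bd V0 x s * Dchain bd V0 y s)"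
      unfolding cinner_def zcycle_def by (simp add: algebra_simps sum.distrib sum_subtractf)
    also have "(\<Sum>s\<in>UNIV. cell_chain x s * cell_chain y s) = (if x = y then 1 else 0)"
      unfolding sum_cell_left by (simp add: cell_chain_def)
    also have "(\<Sum>s\<in>UNIV. cell_chain x s * Dchain bd V0 y s) = 0"
      unfolding sum_cell_left using Dx .
    also have "(\<Sum>s\<in>UNIV. Dchain bd V0 x s * cell_chain y s) = 0"
      unfolding sum_cell_right using Dy .
    finally show ?thesis unfolding cinner_def by simp
  qed
  have geom: "Mesh_geom bd V0 N en = 1\<^sub>m N + Mesh_sharp_geom bd V0 N en"
  proof (rule eq_matI)
    fix a b assume ab: "a < dim_row (1\<^sub>m N + Mesh_sharp_geom bd V0 N en)" "b < dim_col (1\<^sub>m N + Mesh_sharp_geom bd V0 N en)"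
    then have a: "a < N" and b: "b < N" by (auto simp: Mesh_sharp_geom_def)
    have "en a = en b \<longleftrightarrow> a = b" using en_inj a b unfolding inj_on_def by auto
    then show "Mesh_geom bd V0 N en $$ (a, b) = (1\<^sub>m N + Mesh_sharp_geom bd V0 N en) $$ (a, b)"
      unfolding Mesh_geom_def Mesh_sharp_geom_def using a b zz[OF en_out[OF a] en_out[OF b]] by simp
  qed (auto simp: Mesh_geom_def Mesh_sharp_geom_def)
  have part1: "(U + 1) \<cdot>\<^sub>m 1\<^sub>m N - Mesh_geom bd V0 N en = U \<cdot>\<^sub>m 1\<^sub>m N - Mesh_sharp_geom bd V0 N en" for U :: real
    unfolding geom by (rule eq_matI) (auto simp: Mesh_sharp_geom_def algebra_simps)
  define jj where "jj V = card (V \<inter> (UNIV - V0))" for V :: "'d set"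
  define sq where "sq V = (det (S.T (enum_set r V)))^2" for V :: "'d set"
  define Sr where "Sr = {V :: 'd set. card V = r}"
  define G where "G U = (\<Sum>V\<in>Sr. (-1) ^ jj V * sq V * U ^ (N - jj V))" for U :: real
  have key: "det (U \<cdot>\<^sub>m 1\<^sub>m N - transpose_mat A * A) = G U" if "U \<noteq> 0" for U :: real
    unfolding G_def Sr_def jj_def sq_def A_def by (rule key_identity[OF S N_def enum that])
  have key0: "det (0 \<cdot>\<^sub>m 1\<^sub>m N - transpose_mat A * A) = G 0"
  proof (rule eq_at_zero[of "\<lambda>U. det (U \<cdot>\<^sub>m 1\<^sub>m N - transpose_mat A * A)" G, simplified])
    show "((\<lambda>U. det (U \<cdot>\<^sub>m 1\<^sub>m N - transpose_mat A * A)) \<longlongrightarrow> det (0 \<cdot>\<^sub>m 1\<^sub>m N - transpose_mat A * A)) (at 0)"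
      by (rule det_char_cont) (use Ac in auto)
    have "isCont G 0" unfolding G_def by (intro continuous_intros)
    then show "(G \<longlongrightarrow> G 0) (at 0)" unfolding isCont_def .
    show "\<And>U. U \<noteq> 0 \<Longrightarrow> det (U \<cdot>\<^sub>m 1\<^sub>m N - transpose_mat A * A) = G U" using key by simp
  qed
  have keyall: "det (U \<cdot>\<^sub>m 1\<^sub>m N - Mesh_sharp_geom bd V0 N en) = G U" for U :: real
    using key key0 unfolding sharp by (cases "U = 0") auto
  have t0pos: "torsion_order bd bd' V0 > 0"
  proof -
    have "(\<lambda>t. 0) \<in> Lt bd bd'"
      unfolding Lt_def cycles_dm1_def by (auto simp: ibdry_def intro!: exI[of _ "\<lambda>s. 0"] simp: rbdry_zero)
    then have "cls (bounds_dm1 bd V0) ` Lt bd bd' \<noteq> {}" by auto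
    moreover have "finite (cls (bounds_dm1 bd V0) ` Lt bd bd')" by (rule finite_classes[OF forest])
    ultimately show ?thesis unfolding torsion_order_cls TS_eq_Lt[OF forest] by (simp add: card_gt_0_iff)
  qed
  have sq_forest: "sq V = (real (torsion_order bd bd' V) / real (torsion_order bd bd' V0))\<^sup>2"
    if V: "spanning_forest bd V" for V
  proof -
    have cV: "card V = r" by (rule S.forest_card[OF V])
    have eb: "bij_betw (enum_set r V) {0..<r} V" by (rule enum_set_bij) (use cV in auto)
    have "real (torsion_order bd bd' V) = \<bar>det (S.T (enum_set r V))\<bar> * real (torsion_order bd bd' V0)"
      by (rule S.torsion_det[OF chain_complex V eb])
    then have "real (torsion_order bd bd' V) / real (torsion_order bd bd' V0) = \<bar>det (S.T (enum_set r V))\<bar>"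
      using t0pos by simp
    then show ?thesis unfolding sq_def by simp
  qed
  have sq_nonforest: "sq V = 0" if V: "card V = r" "\<not> spanning_forest bd V" for V
  proof -
    have eb: "bij_betw (enum_set r V) {0..<r} V" by (rule enum_set_bij) (use V in auto)
    have "det (S.T (enum_set r V)) = 0" using S.det_nonzero_forest[OF _ eb] V(2) by blast
    then show ?thesis unfolding sq_def by simp
  qed
  have sqV0: "sq V0 = 1"
  proof -
    have eb: "bij_betw (enum_set r V0) {0..<r} V0" by (rule enum_set_bij) (auto simp: r_def)
    show ?thesis unfolding sq_def using S.T_perm[OF wb eb] S.T_w by (metis abs_1 power2_abs power_one)
  qed
  have finSr: "finite Sr" by (rule finite_subset[of _ UNIV]) auto
  have jjN: "jj V \<le> N" for V unfolding jj_def N_def by (rule card_mono) auto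
  have regroup: "G U = U ^ N + (\<Sum>j=1..N. (-1) ^ j *
           (\<Sum>V\<in>{V. spanning_forest bd V \<and> card (V \<inter> (UNIV - V0)) = j}.
              (real (torsion_order bd bd' V) / real (torsion_order bd bd' V0))\<^sup>2)
           * U ^ (N - j))" for U :: real
  proof -
    have "G U = (\<Sum>j\<in>{0..N}. \<Sum>V\<in>{V\<in>Sr. jj V = j}. (-1) ^ jj V * sq V * U ^ (N - jj V))"
      unfolding G_def by (rule sum.group[symmetric]) (use finSr jjN in auto)
    also have "\<dots> = (\<Sum>j\<in>{0..N}. (-1) ^ j * (\<Sum>V\<in>{V\<in>Sr. jj V = j}. sq V) * U ^ (N - j))"
      by (rule sum.cong[OF refl]) (auto simp: sum_distrib_left sum_distrib_right intro!: sum.cong)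
    also have "\<dots> = (-1) ^ 0 * (\<Sum>V\<in>{V\<in>Sr. jj V = 0}. sq V) * U ^ (N - 0) +
        (\<Sum>j\<in>{Suc 0..N}. (-1) ^ j * (\<Sum>V\<in>{V\<in>Sr. jj V = j}. sq V) * U ^ (N - j))"
      by (rule sum.atLeast_Suc_atMost) simp
    also have "{V\<in>Sr. jj V = 0} = {V0}"
    proof
      show "{V\<in>Sr. jj V = 0} \<subseteq> {V0}"
      proof
        fix V assume V: "V \<in> {V\<in>Sr. jj V = 0}"
        then have "V \<inter> (UNIV - V0) = {}" unfolding jj_def by simp
        then have "V \<subseteq> V0" by blast
        moreover have "card V = card V0" using V unfolding Sr_def r_def by simp
        ultimately have "V = V0" using card_subset_eq[of V0 V] by simp
        then show "V \<in> {V0}" by simp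
      qed
      show "{V0} \<subseteq> {V\<in>Sr. jj V = 0}" unfolding Sr_def jj_def r_def by auto
    qed
    also have "(\<Sum>j\<in>{Suc 0..N}. (-1) ^ j * (\<Sum>V\<in>{V\<in>Sr. jj V = j}. sq V) * U ^ (N - j)) =
        (\<Sum>j=1..N. (-1) ^ j * (\<Sum>V\<in>{V. spanning_forest bd V \<and> card (V \<inter> (UNIV - V0)) = j}.
              (real (torsion_order bd bd' V) / real (torsion_order bd bd' V0))\<^sup>2) * U ^ (N - j))"
    proof (rule sum.cong)
      fix j assume "j \<in> {1..N}"
      have "(\<Sum>V\<in>{V\<in>Sr. jj V = j}. sq V) = (\<Sum>V\<in>{V. spanning_forest bd V \<and> card (V \<inter> (UNIV - V0)) = j}.
              (real (torsion_order bd bd' V) / real (torsion_order bd bd' V0))\<^sup>2)"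
      proof (rule sum.mono_neutral_cong_right)
        show "finite {V\<in>Sr. jj V = j}" using finSr by simp
        show "{V. spanning_forest bd V \<and> card (V \<inter> (UNIV - V0)) = j} \<subseteq> {V\<in>Sr. jj V = j}"
          unfolding Sr_def jj_def using S.forest_card by auto
        show "\<forall>V\<in>{V\<in>Sr. jj V = j} - {V. spanning_forest bd V \<and> card (V \<inter> (UNIV - V0)) = j}. sq V = 0"
          unfolding Sr_def jj_def using sq_nonforest by auto
        show "\<And>V. V \<in> {V. spanning_forest bd V \<and> card (V \<inter> (UNIV - V0)) = j} \<Longrightarrow>
           sq V = (real (torsion_order bd bd' V) / real (torsion_order bd bd' V0))\<^sup>2"
          using sq_forest by auto
      qed
      then show "(-1) ^ j * (\<Sum>V\<in>{V\<in>Sr. jj V = j}. sq V) * U ^ (N - j) =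
         (-1) ^ j * (\<Sum>V\<in>{V. spanning_forest bd V \<and> card (V \<inter> (UNIV - V0)) = j}.
              (real (torsion_order bd bd' V) / real (torsion_order bd bd' V0))\<^sup>2) * U ^ (N - j)" by simp
    qed simp
    finally show ?thesis using sqV0 by simp
  qed
  show ?thesis
  proof (intro allI conjI)
    fix U :: real
    show "det ((U + 1) \<cdot>\<^sub>m 1\<^sub>m N - Mesh_geom bd V0 N en) = det (U \<cdot>\<^sub>m 1\<^sub>m N - Mesh_sharp_geom bd V0 N en)"
      unfolding part1 ..
    show "det (U \<cdot>\<^sub>m 1\<^sub>m N - Mesh_sharp_geom bd V0 N en) = U ^ N + (\<Sum>j=1..N. (-1) ^ j *
           (\<Sum>V\<in>{V. spanning_forest bd V \<and> card (V \<inter> (UNIV - V0)) = j}.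
              (real (torsion_order bd bd' V) / real (torsion_order bd bd' V0))\<^sup>2)
           * U ^ (N - j))"
      unfolding keyall regroup ..
  qed
qed

end
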